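(* Let $m\ge 3$. Call $\mathbf{x}=(x_1,\ldots,x_m)\in\mathbb{R}^m$ generic if the $\binom{m}{2}$ midpoints $(x_i+x_j)/2$, $1\le i<j\le m$, are pairwise distinct (in particular the $x_i$ are pairwise distinct). For such $\mathbf{x}$ define its ranking pattern $$\mathrm{RP}^{\mathrm{UF}}(\mathbf{x})=\{(i_1\cdots i_m)\in\mathbb{P}_m:\ |y-x_{i_1}|<\cdots<|y-x_{i_m}|\text{ for some }y\in\mathbb{R}\},$$ where $\mathbb{P}_m$ is the set of permutations $(i_1\cdots i_m)$ of $[m]=\{1,\ldots,m\}$. Two ranking patterns $\mathrm{RP}^{\mathrm{UF}}(\mathbf{x})$, $\mathrm{RP}^{\mathrm{UF}}(\mathbf{x}')$ are called equivalent if $\mathrm{RP}^{\mathrm{UF}}(\mathbf{x})=\{(\sigma(i_1)\cdots\sigma(i_m)):(i_1\cdots i_m)\in\mathrm{RP}^{\mathrm{UF}}(\mathbf{x}')\}$ for some bijection $\sigma:[m]\to[m]$. Let $r_{\mathrm{IE}}(m)$ be the number of equivalence classes of ranking patterns $\mathrm{RP}^{\mathrm{UF}}(\mathbf{x})$ with $\mathbf{x}\in\mathbb{R}^m$ generic, and let $r_0(m)$ be the number of distinct ranking patterns $\mathrm{RP}^{\mathrm{UF}}(\mathbf{x})$ with $\mathbf{x}$ generic and $x_1<\cdots<x_m$. Let $\mathcal{B}_m$ be the braid arrangement $\{\{x_i=x_j\}:1\le i<j\le m\}$ in $\mathbb{R}^m$ and $\mathcal{M}_m$ the mid-hyperplane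 arrangement consisting of the hyperplanes of $\mathcal{B}_m$ together with the hyperplanes $\{x_i+x_j=x_k+x_l\}$ for all $(i,j,k,l)$ with $i,j,k,l$ pairwise distinct, $1\le i<j\le m$, $i<k<l\le m$. Then $$r_{\mathrm{IE}}(m)=\begin{cases} r_0(3)=\dfrac{|\mathrm{ch}(\mathcal{B}_3)|}{3!}=1, & m=3,\\[2mm] \dfrac{r_0(m)}{2}=\dfrac{|\mathrm{ch}(\mathcal{M}_m)|}{2\cdot m!}, & m\ge 4,\end{cases}$$ where $\mathrm{ch}(\cdot)$ denotes the set of chambers (connected components of the complement of the union of the hyperplanes) of an arrangement. *)

theory Defs
  imports "HOL-Analysis.Analysis" "HOL-Combinatorics.Multiset_Permutations"
begin

text \<open>Points of R^m are modelled as functions nat => real, with coordinates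
  indexed by 1..m and value 0 outside {1..m}.\<close>

definition Rm :: "nat \<Rightarrow> (nat \<Rightarrow> real) set" where
  "Rm m = {x. \<forall>i. i \<notin> {1..m} \<longrightarrow> x i = 0}"

definition generic :: "nat \<Rightarrow> (nat \<Rightarrow> real) \<Rightarrow> bool" where
  "generic m x \<longleftrightarrow> x \<in> Rm m \<and>
     (\<forall>i j k l. 1 \<le> i \<and> i < j \<and> j \<le> m \<and> 1 \<le> k \<and> k < l \<and> l \<le> m \<and> (i, j) \<noteq> (k, l)
        \<longrightarrow> (x i + x j) / 2 \<noteq> (x k + x l) / 2)"

text \<open>Permutations (i_1 ... i_m) of [m] are lists.\<close>
definition RP_UF :: "nat \<Rightarrow> (nat \<Rightarrow> real) \<Rightarrow> nat list set" where
  "RP_UF m x = {p \<in> permutations_of_set {1..m}.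
      \<exists>y::real. sorted_wrt (<) (map (\<lambda>i. \<bar>y - x i\<bar>) p)}"

definition RP_equiv :: "nat \<Rightarrow> nat list set \<Rightarrow> nat list set \<Rightarrow> bool" where
  "RP_equiv m P Q \<longleftrightarrow> (\<exists>\<sigma>. bij_betw \<sigma> {1..m} {1..m} \<and> P = map \<sigma> ` Q)"

definition RPs :: "nat \<Rightarrow> nat list set set" where
  "RPs m = {RP_UF m x | x. generic m x}"

definition r_IE :: "nat \<Rightarrow> nat" where
  "r_IE m = card (RPs m // {(P, Q). P \<in> RPs m \<and> Q \<in> RPs m \<and> RP_equiv m P Q})"

definition r0 :: "nat \<Rightarrow> nat" where
  "r0 m = card {RP_UF m x | x. generic m x \<and> (\<forall>i. 1 \<le> i \<and> i < m \<longrightarrow> x i < x (Suc i))}"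

definition braid_arr :: "nat \<Rightarrow> (nat \<Rightarrow> real) set set" where
  "braid_arr m = {{x \<in> Rm m. x i = x j} | i j. 1 \<le> i \<and> i < j \<and> j \<le> m}"

definition mid_arr :: "nat \<Rightarrow> (nat \<Rightarrow> real) set set" where
  "mid_arr m = braid_arr m \<union>
     {{x \<in> Rm m. x i + x j = x k + x l} | i j k l.
        distinct [i, j, k, l] \<and> 1 \<le> i \<and> i < j \<and> j \<le> m \<and> i < k \<and> k < l \<and> l \<le> m}"

definition chambers :: "nat \<Rightarrow> (nat \<Rightarrow> real) set set \<Rightarrow> (nat \<Rightarrow> real) set set" where
  "chambers m A = {connected_component_set (Rm m - \<Union>A) x | x. x \<in> Rm m - \<Union>A}"

end

theory Submission
  imports Defs
begin

lemma generic_alt: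
  "generic m x \<longleftrightarrow> x \<in> Rm m \<and> (\<forall>i j k l. i\<in>{1..m} \<and> j\<in>{1..m} \<and> k\<in>{1..m} \<and> l\<in>{1..m}
      \<and> i\<noteq>j \<and> k\<noteq>l \<and> {i,j} \<noteq> {k,l} \<longrightarrow> x i + x j \<noteq> x k + x l)"
proof
  assume g: "generic m x"
  have *: "x i + x j \<noteq> x k + x l" if "i\<in>{1..m}" "j\<in>{1..m}" "k\<in>{1..m}" "l\<in>{1..m}"
      "i<j" "k<l" "{i,j} \<noteq> {k,l}" for i j k l
  proof -
    have "(i,j)\<noteq>(k,l)" using that by auto
    then have "(x i + x j)/2 \<noteq> (x k + x l)/2" using g that unfolding generic_def by auto
    then show ?thesis by auto
  qed
  show "x \<in> Rm m \<and> (\<forall>i j k l. i\<in>{1..m} \<and> j\<in>{1..m} \<and> k\<in>{1..m} \<and> l\<in>{1..m}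
      \<and> i\<noteq>j \<and> k\<noteq>l \<and> {i,j} \<noteq> {k,l} \<longrightarrow> x i + x j \<noteq> x k + x l)"
  proof (intro conjI allI impI)
    show "x \<in> Rm m" using g generic_def by blast
    fix i j k l assume h: "i\<in>{1..m} \<and> j\<in>{1..m} \<and> k\<in>{1..m} \<and> l\<in>{1..m}
      \<and> i\<noteq>j \<and> k\<noteq>l \<and> {i,j} \<noteq> {k,l}"
    show "x i + x j \<noteq> x k + x l"
    proof (cases "i<j")
      case True
      then show ?thesis
      proof (cases "k<l")
        case True then show ?thesis using * h \<open>i<j\<close> by blast
      next
        case False then show ?thesis using *[of i j l k] h \<open>i<j\<close>
          by (metis add.commute insert_commute linorder_neqE_nat)
      qed
    next
      case False
      then show ?thesis
      proof (cases "k<l")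
        case True then show ?thesis using *[of j i k l] h \<open>\<not>i<j\<close>
          by (metis add.commute insert_commute linorder_neqE_nat)
      next
        case False then show ?thesis using *[of j i l k] h \<open>\<not>i<j\<close>
          by (metis add.commute insert_commute linorder_neqE_nat)
      qed
    qed
  qed
next
  assume h: "x \<in> Rm m \<and> (\<forall>i j k l. i\<in>{1..m} \<and> j\<in>{1..m} \<and> k\<in>{1..m} \<and> l\<in>{1..m}
      \<and> i\<noteq>j \<and> k\<noteq>l \<and> {i,j} \<noteq> {k,l} \<longrightarrow> x i + x j \<noteq> x k + x l)"
  show "generic m x" unfolding generic_def
  proof (intro conjI allI impI)
    show "x \<in> Rm m" using h by blast
    fix i j k l assume a: "1 \<le> i \<and> i < j \<and> j \<le> m \<and> 1 \<le> k \<and> k < l \<and> l \<le> m \<and> (i, j) \<noteq> (k, l)"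
    have "{i,j} \<noteq> {k,l}" using a by (metis doubleton_eq_iff less_not_sym)
    then have "x i + x j \<noteq> x k + x l" using h a by auto
    then show "(x i + x j) / 2 \<noteq> (x k + x l) / 2" by simp
  qed
qed

lemma generic_inj:
  assumes "generic m x" "m \<ge> 3" "i\<in>{1..m}" "j\<in>{1..m}" "i \<noteq> j"
  shows "x i \<noteq> x j"
proof -
  have "\<exists>k\<in>{1..m}. k \<noteq> i \<and> k \<noteq> j"
  proof -
    have "card ({1..m} - {i,j}) \<ge> 1"
    proof -
      have "card ({1..m} - {i,j}) = m - 2" using assms
        by (subst card_Diff_subset) auto
      then show ?thesis using assms by simp
    qed
    then have "{1..m} - {i,j} \<noteq> {}" by (metis card.empty not_one_le_zero)
    then show ?thesis by blast
  qed
  then obtain k where k: "k\<in>{1..m}" "k\<noteq>i" "k\<noteq>j" by blast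
  have "{i,k} \<noteq> {j,k}" using assms k by (metis doubleton_eq_iff)
  then have "x i + x k \<noteq> x j + x k" using assms k generic_alt by blast
  then show ?thesis by auto
qed

lemma RP_sub: "RP_UF m x \<subseteq> permutations_of_set {1..m}"
  unfolding RP_UF_def by auto

lemma key_abs:
  fixes u v y :: real
  assumes "u \<noteq> v"
  shows "\<bar>y-u\<bar> < \<bar>y-v\<bar> \<longleftrightarrow> (u<v \<and> 2*y<u+v) \<or> (v<u \<and> u+v<2*y)"
  using assms by (cases "y \<le> u"; cases "y \<le> v"; auto simp: abs_if)

lemma sorted_both:
  assumes "sorted_wrt (<) (map f p)" "sorted_wrt (<) (map (g::_\<Rightarrow>'b::linorder) p)"
    "i \<in> set p" "j \<in> set p" "(f i :: 'a::linorder) < f j"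
  shows "g i < g j"
proof -
  obtain a where a: "a < length p" "p!a = i" using assms by (metis in_set_conv_nth)
  obtain b where b: "b < length p" "p!b = j" using assms by (metis in_set_conv_nth)
  have "a \<noteq> b" using a b assms(5) by auto
  show ?thesis
  proof (cases "a<b")
    case True then show ?thesis using assms(2) a b by (auto simp: sorted_wrt_iff_nth_less)
  next
    case False then have "b<a" using \<open>a\<noteq>b\<close> by simp
    then have "f j < f i" using assms(1) a b by (auto simp: sorted_wrt_iff_nth_less)
    then show ?thesis using assms(5) by simp
  qed
qed

definition Qm :: "nat \<Rightarrow> (nat\<times>nat\<times>nat\<times>nat) set" where
  "Qm m = {(i,j,k,l). i\<in>{1..m} \<and> j\<in>{1..m} \<and> k\<in>{1..m} \<and> l\<in>{1..m} \<and> ((i\<noteq>j \<and> k\<noteq>l) \<or> (i=j \<and> k=l))}"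

definition sig :: "nat \<Rightarrow> (nat\<Rightarrow>real) \<Rightarrow> nat\<times>nat\<times>nat\<times>nat \<Rightarrow> bool" where
  "sig m x = (\<lambda>(i,j,k,l). (i,j,k,l) \<in> Qm m \<and> x i + x j < x k + x l)"

lemma separate:
  fixes A B :: "real set"
  assumes "finite A" "finite B" "\<forall>a\<in>A. \<forall>b\<in>B. a<b"
  shows "\<exists>t. (\<forall>a\<in>A. a<t) \<and> (\<forall>b\<in>B. t<b)"
proof (cases "A = {}")
  case True
  show ?thesis
  proof (cases "B = {}")
    case True with \<open>A={}\<close> show ?thesis by auto
  next
    case False
    have "\<forall>b\<in>B. Min B - 1 < b"
    proof
      fix b assume "b \<in> B" then have "Min B \<le> b" using assms(2) by simp
      then show "Min B - 1 < b" by linarith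
    qed
    then show ?thesis using True by blast
  qed
next
  case False
  show ?thesis
  proof (cases "B = {}")
    case True
    have "\<forall>a\<in>A. a < Max A + 1"
    proof
      fix a assume "a \<in> A" then have "a \<le> Max A" using assms(1) by simp
      then show "a < Max A + 1" by linarith
    qed
    with True show ?thesis by blast
  next
    case BF: False
    have "Max A \<in> A" "Min B \<in> B" using assms False BF by auto
    then have lt: "Max A < Min B" using assms by blast
    have "\<forall>a\<in>A. a < (Max A + Min B)/2"
    proof
      fix a assume "a \<in> A" then have "a \<le> Max A" using assms(1) by simp
      then show "a < (Max A + Min B)/2" using lt by (simp add: field_simps)
    qed
    moreover have "\<forall>b\<in>B. (Max A + Min B)/2 < b"
    proof
      fix b assume "b \<in> B" then have "Min B \<le> b" using assms(2) by simp
      then show "(Max A + Min B)/2 < b" using lt by (simp add: field_simps)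
    qed
    ultimately show ?thesis by blast
  qed
qed

lemma abs_eq_mid:
  fixes u v y :: real
  assumes "\<bar>y - u\<bar> = \<bar>y - v\<bar>" "u \<noteq> v"
  shows "u + v = 2*y"
  using assms by (smt (verit))

lemma L1:
  assumes m3: "m \<ge> 3" and g: "generic m x" and g': "generic m x'" and s: "sig m x = sig m x'"
    and p: "p \<in> RP_UF m x"
  shows "p \<in> RP_UF m x'"
proof -
  obtain y where y: "sorted_wrt (<) (map (\<lambda>i. \<bar>y - x i\<bar>) p)" and pp: "p \<in> permutations_of_set {1..m}"
    using p unfolding RP_UF_def by auto
  have setp: "set p = {1..m}" and dp: "distinct p" using pp by (auto simp: permutations_of_set_def)
  define Pairs where "Pairs = {(i,j). i\<in>{1..m} \<and> j\<in>{1..m} \<and> i\<noteq>j}"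
  have fP: "finite Pairs" unfolding Pairs_def
    by (rule finite_subset[of _ "{1..m}\<times>{1..m}"]) auto
  define A where "A = (\<lambda>(i,j). x' i + x' j) ` {(i,j)\<in>Pairs. x i + x j < 2*y}"
  define B where "B = (\<lambda>(i,j). x' i + x' j) ` {(i,j)\<in>Pairs. 2*y < x i + x j}"
  have "finite {(i,j). (i,j)\<in>Pairs \<and> x i + x j < 2*y}" by (rule finite_subset[OF _ fP]) auto
  moreover have "finite {(i,j). (i,j)\<in>Pairs \<and> 2*y < x i + x j}" by (rule finite_subset[OF _ fP]) auto
  ultimately have "finite A" "finite B" unfolding A_def B_def by auto
  moreover have "\<forall>a\<in>A. \<forall>b\<in>B. a<b"
  proof (intro ballI)
    fix a b assume "a\<in>A" "b\<in>B"
    obtain i j where ij: "(i,j)\<in>Pairs" "x i + x j < 2*y" "a = x' i + x' j"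
      using \<open>a\<in>A\<close> unfolding A_def by auto
    obtain k l where kl: "(k,l)\<in>Pairs" "2*y < x k + x l" "b = x' k + x' l"
      using \<open>b\<in>B\<close> unfolding B_def by auto
    have "(i,j,k,l) \<in> Qm m" using ij(1) kl(1) unfolding Qm_def Pairs_def by auto
    then have "sig m x (i,j,k,l)" using ij(2) kl(2) unfolding sig_def by simp
    then have "sig m x' (i,j,k,l)" using s by simp
    then show "a<b" using ij(3) kl(3) unfolding sig_def by simp
  qed
  ultimately have "\<exists>t. (\<forall>a\<in>A. a<t) \<and> (\<forall>b\<in>B. t<b)" by (rule separate)
  then obtain t where tA: "\<forall>a\<in>A. a<t" and tB: "\<forall>b\<in>B. t<b" by blast
  define y' where "y' = t/2"
  have "sorted_wrt (<) (map (\<lambda>i. \<bar>y' - x' i\<bar>) p)"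
    unfolding sorted_wrt_iff_nth_less
  proof (intro allI impI)
    fix a b assume ab0: "a < b" "b < length (map (\<lambda>i. \<bar>y' - x' i\<bar>) p)"
    then have ab: "a < b \<and> b < length (map (\<lambda>i. \<bar>y' - x' i\<bar>) p)" by simp
    define i where "i = p!a"
    define j where "j = p!b"
    have ab': "a < length p" "b < length p" using ab by auto
    have "i \<in> set p" "j \<in> set p" using ab' unfolding i_def j_def by simp_all
    moreover have "i \<noteq> j" using dp ab ab' unfolding i_def j_def by (simp add: nth_eq_iff_index_eq)
    ultimately have ij: "i \<in> {1..m}" "j \<in> {1..m}" "i \<noteq> j" using setp by auto
    have "map (\<lambda>i. \<bar>y - x i\<bar>) p ! a < map (\<lambda>i. \<bar>y - x i\<bar>) p ! b"
      by (rule sorted_wrt_nth_less[OF y]) (use ab ab' in simp_all)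
    then have lt: "\<bar>y - x i\<bar> < \<bar>y - x j\<bar>" using ab' unfolding i_def j_def by simp
    have ne: "x i \<noteq> x j" using generic_inj[OF g m3 ij] .
    have ne': "x' i \<noteq> x' j" using generic_inj[OF g' m3 ij] .
    have ordeq: "x i < x j \<longleftrightarrow> x' i < x' j"
    proof -
      have "sig m x (i,i,j,j) = sig m x' (i,i,j,j)" using s by simp
      moreover have "(i,i,j,j) \<in> Qm m" using ij by (simp add: Qm_def)
      ultimately have "(x i + x i < x j + x j) = (x' i + x' i < x' j + x' j)" by (simp add: sig_def)
      then show ?thesis by auto
    qed
    have pij: "(i,j) \<in> Pairs" using ij unfolding Pairs_def by auto
    from key_abs[OF ne] lt
    have "(x i < x j \<and> 2*y < x i + x j) \<or> (x j < x i \<and> x i + x j < 2*y)" by simp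
    then have "(x' i < x' j \<and> 2*y' < x' i + x' j) \<or> (x' j < x' i \<and> x' i + x' j < 2*y')"
    proof
      assume h: "x i < x j \<and> 2*y < x i + x j"
      then have "(i,j) \<in> {(i,j). (i,j)\<in>Pairs \<and> 2*y < x i + x j}" using pij by simp
      then have "(\<lambda>(i,j). x' i + x' j) (i,j) \<in> B" unfolding B_def by (rule imageI)
      then have "x' i + x' j \<in> B" by simp
      then show ?thesis using h ordeq tB unfolding y'_def by auto
    next
      assume h: "x j < x i \<and> x i + x j < 2*y"
      then have "(i,j) \<in> {(i,j). (i,j)\<in>Pairs \<and> x i + x j < 2*y}" using pij by simp
      then have "(\<lambda>(i,j). x' i + x' j) (i,j) \<in> A" unfolding A_def by (rule imageI)
      then have "x' i + x' j \<in> A" by simp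
      then show ?thesis using h ordeq ne ne' tA unfolding y'_def by auto
    qed
    then have "\<bar>y' - x' i\<bar> < \<bar>y' - x' j\<bar>" using key_abs[OF ne'] by simp
    then show "map (\<lambda>i. \<bar>y' - x' i\<bar>) p ! a < map (\<lambda>i. \<bar>y' - x' i\<bar>) p ! b"
      using ab unfolding i_def j_def by auto
  qed
  then show ?thesis using pp unfolding RP_UF_def by auto
qed

lemma L1eq:
  assumes "m \<ge> 3" "generic m x" "generic m x'" "sig m x = sig m x'"
  shows "RP_UF m x = RP_UF m x'"
  using L1[OF assms] L1[OF assms(1,3,2) assms(4)[symmetric]] by blast

lemma side:
  fixes x x' :: "nat \<Rightarrow> real" and y y' :: real
  assumes "sorted_wrt (<) (map (\<lambda>i. \<bar>y - x i\<bar>) p)" "sorted_wrt (<) (map (\<lambda>i. \<bar>y' - x' i\<bar>) p)"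
    "a \<in> set p" "b \<in> set p" "x a < x b" "x' a < x' b"
  shows "(x a + x b < 2*y \<Longrightarrow> x' a + x' b < 2*y')" and "(2*y < x a + x b \<Longrightarrow> 2*y' < x' a + x' b)"
proof -
  assume h: "x a + x b < 2*y"
  have "\<bar>y - x b\<bar> < \<bar>y - x a\<bar>" using key_abs[of "x b" "x a" y] h assms(5) by auto
  then have "\<bar>y' - x' b\<bar> < \<bar>y' - x' a\<bar>" using sorted_both[OF assms(1,2,4,3)] by blast
  then show "x' a + x' b < 2*y'" using key_abs[of "x' b" "x' a" y'] assms(6) by auto
next
  assume h: "2*y < x a + x b"
  have "\<bar>y - x a\<bar> < \<bar>y - x b\<bar>" using key_abs[of "x a" "x b" y] h assms(5) by auto
  then have "\<bar>y' - x' a\<bar> < \<bar>y' - x' b\<bar>" using sorted_both[OF assms(1,2,3,4)] by blast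
  then show "2*y' < x' a + x' b" using key_abs[of "x' a" "x' b" y'] assms(6) by auto
qed

lemma avoid_finite:
  fixes a b :: real
  assumes "a < b" "finite F"
  shows "\<exists>t. a < t \<and> t < b \<and> t \<notin> F"
proof -
  have "infinite ({a<..<b} - F)" using assms by (simp add: Diff_infinite_finite)
  then obtain t where "t \<in> {a<..<b} - F" by (metis finite.emptyI ex_in_conv)
  then show ?thesis by auto
qed

lemma L2a:
  assumes m3: "m \<ge> 3" and g: "generic m x" and g': "generic m x'"
    and ord: "\<forall>a\<in>{1..m}. \<forall>b\<in>{1..m}. x a < x b \<longleftrightarrow> x' a < x' b"
    and R: "RP_UF m x \<subseteq> RP_UF m x'" and sq: "sig m x q"
  shows "sig m x' q"
proof -
  obtain i j k l where q: "q = (i,j,k,l)" by (cases q) auto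
  have Q: "(i,j,k,l) \<in> Qm m" and lt: "x i + x j < x k + x l" using sq unfolding q sig_def by auto
  have rng: "i\<in>{1..m}" "j\<in>{1..m}" "k\<in>{1..m}" "l\<in>{1..m}" using Q unfolding Qm_def by auto
  show ?thesis
  proof (cases "i = j \<and> k = l")
    case True
    then have "x i < x k" using lt by simp
    then have "x' i < x' k" using ord rng by blast
    then show ?thesis using True Q unfolding q sig_def by auto
  next
    case False
    then have ij: "i \<noteq> j" and kl: "k \<noteq> l" using Q unfolding Qm_def by auto
    define F where "F = (\<lambda>(a,b). x a + x b) ` ({1..m}\<times>{1..m})"
    have "finite F" unfolding F_def by auto
    then obtain t where t: "x i + x j < t" "t < x k + x l" "t \<notin> F" using avoid_finite lt by blast
    define y where "y = t/2"
    define p where "p = sort_key (\<lambda>a. \<bar>y - x a\<bar>) [1..<Suc m]"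
    have setp: "set p = {1..m}" unfolding p_def by auto
    have dp: "distinct p" unfolding p_def by simp
    have inj: "inj_on (\<lambda>a. \<bar>y - x a\<bar>) (set p)"
    proof (rule inj_onI)
      fix a b assume ab: "a \<in> set p" "b \<in> set p" "\<bar>y - x a\<bar> = \<bar>y - x b\<bar>"
      show "a = b"
      proof (rule ccontr)
        assume "a \<noteq> b"
        then have "x a \<noteq> x b" using generic_inj[OF g m3] ab setp by auto
        then have "x a + x b = 2*y" using ab(3) abs_eq_mid by blast
        then have "t \<in> F" using ab setp unfolding y_def F_def by force
        then show False using t by simp
      qed
    qed
    have sp: "sorted_wrt (<) (map (\<lambda>a. \<bar>y - x a\<bar>) p)"
      unfolding strict_sorted_iff using inj dp unfolding p_def
      by (simp add: distinct_map)
    have "p \<in> permutations_of_set {1..m}" using setp dp by (simp add: permutations_of_set_def)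
    then have "p \<in> RP_UF m x" using sp unfolding RP_UF_def by auto
    then have "p \<in> RP_UF m x'" using R by auto
    then obtain y' where sp': "sorted_wrt (<) (map (\<lambda>a. \<bar>y' - x' a\<bar>) p)" unfolding RP_UF_def by auto
    have A: "x' i + x' j < 2*y'"
    proof (cases "x i < x j")
      case True
      then have "x' i < x' j" using ord rng by blast
      then show ?thesis using side(1)[OF sp sp', of i j] True t setp rng unfolding y_def by auto
    next
      case False
      then have "x j < x i" using generic_inj[OF g m3 rng(1,2) ij] by auto
      then have "x' j < x' i" using ord rng by blast
      then show ?thesis using side(1)[OF sp sp', of j i] \<open>x j < x i\<close> t setp rng unfolding y_def
        by (auto simp: add.commute)
    qed
    have B: "2*y' < x' k + x' l"
    proof (cases "x k < x l")
      case True
      then have "x' k < x' l" using ord rng by blast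
      then show ?thesis using side(2)[OF sp sp', of k l] True t setp rng unfolding y_def by auto
    next
      case False
      then have "x l < x k" using generic_inj[OF g m3 rng(3,4) kl] by auto
      then have "x' l < x' k" using ord rng by blast
      then show ?thesis using side(2)[OF sp sp', of l k] \<open>x l < x k\<close> t setp rng unfolding y_def
        by (auto simp: add.commute)
    qed
    show ?thesis using A B Q unfolding q sig_def by auto
  qed
qed

lemma L2:
  assumes "m \<ge> 3" "generic m x" "generic m x'"
    "\<forall>a\<in>{1..m}. \<forall>b\<in>{1..m}. x a < x b \<longleftrightarrow> x' a < x' b"
    "RP_UF m x = RP_UF m x'"
  shows "sig m x = sig m x'"
proof
  fix q
  show "sig m x q = sig m x' q"
    using L2a[OF assms(1,2,3,4), of q] L2a[OF assms(1,3,2), of q] assms(4,5) by auto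
qed

definition incr :: "nat \<Rightarrow> (nat \<Rightarrow> real) \<Rightarrow> bool" where
  "incr m x \<longleftrightarrow> (\<forall>i. 1 \<le> i \<and> i < m \<longrightarrow> x i < x (Suc i))"

lemma incr_mono:
  assumes "incr m x" "1 \<le> a" "a < b" "b \<le> m"
  shows "x a < x b"
  using assms(3,4)
proof (induction b)
  case 0 then show ?case by simp
next
  case (Suc b)
  show ?case
  proof (cases "a = b")
    case True then show ?thesis using assms(1,2) Suc.prems unfolding incr_def by auto
  next
    case False
    then have "x a < x b" using Suc by auto
    moreover have "x b < x (Suc b)" using assms(1,2) Suc.prems False unfolding incr_def by auto
    ultimately show ?thesis by simp
  qed
qed

lemma incr_iff:
  assumes "incr m x" "a \<in> {1..m}" "b \<in> {1..m}"
  shows "x a < x b \<longleftrightarrow> a < b"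
proof
  assume h: "x a < x b"
  show "a < b"
  proof (rule ccontr)
    assume "\<not> a < b"
    then have "b = a \<or> b < a" by auto
    then show False using incr_mono[OF assms(1), of b a] assms h by auto
  qed
next
  assume "a < b" then show "x a < x b" using incr_mono[OF assms(1)] assms by auto
qed

lemma generic_perm:
  assumes g: "generic m z" and r: "r permutes {1..m}"
  shows "generic m (z \<circ> r)"
  unfolding generic_alt
proof (intro conjI allI impI)
  show "z \<circ> r \<in> Rm m" using g r unfolding generic_def Rm_def
    by (auto simp: permutes_not_in)
  fix i j k l assume h: "i\<in>{1..m} \<and> j\<in>{1..m} \<and> k\<in>{1..m} \<and> l\<in>{1..m}
      \<and> i\<noteq>j \<and> k\<noteq>l \<and> {i,j} \<noteq> {k,l}"
  have inj: "inj r" using r by (rule permutes_inj)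
  have "{r i, r j} \<noteq> {r k, r l}"
  proof
    assume "{r i, r j} = {r k, r l}"
    then have "r ` {i,j} = r ` {k,l}" by simp
    then have "{i,j} = {k,l}" by (rule inj_image_eq_iff[OF inj, THEN iffD1])
    then show False using h by simp
  qed
  moreover have "r i \<in> {1..m}" "r j \<in> {1..m}" "r k \<in> {1..m}" "r l \<in> {1..m}"
    using h permutes_in_image[OF r] by blast+
  moreover have "r i \<noteq> r j" "r k \<noteq> r l" using h inj by (auto dest: injD)
  ultimately show "(z \<circ> r) i + (z \<circ> r) j \<noteq> (z \<circ> r) k + (z \<circ> r) l"
    using g unfolding generic_alt by auto
qed

lemma generic_neg:
  assumes "generic m z"
  shows "generic m (\<lambda>a. - z a)"
  unfolding generic_def
proof (intro conjI allI impI)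
  show "(\<lambda>a. - z a) \<in> Rm m" using assms unfolding generic_def Rm_def by simp
  fix i j k l assume h: "1 \<le> i \<and> i < j \<and> j \<le> m \<and> 1 \<le> k \<and> k < l \<and> l \<le> m \<and> (i, j) \<noteq> (k, l)"
  then have "(z i + z j) / 2 \<noteq> (z k + z l) / 2" using assms unfolding generic_def by blast
  moreover have "(- z i + - z j) / 2 = - ((z i + z j) / 2)" by (simp only: minus_add_distrib[symmetric] minus_divide_left)
  moreover have "(- z k + - z l) / 2 = - ((z k + z l) / 2)" by (simp only: minus_add_distrib[symmetric] minus_divide_left)
  ultimately show "(- z i + - z j) / 2 \<noteq> (- z k + - z l) / 2" by simp
qed

lemma RP_perm_sub:
  assumes r: "r permutes {1..m}" and p: "p \<in> RP_UF m w"
  shows "map (inv r) p \<in> RP_UF m (w \<circ> r)"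
proof -
  obtain y where y: "sorted_wrt (<) (map (\<lambda>i. \<bar>y - w i\<bar>) p)" and pp: "p \<in> permutations_of_set {1..m}"
    using p unfolding RP_UF_def by auto
  have ri: "inv r permutes {1..m}" using r by (rule permutes_inv)
  have "set (map (inv r) p) = {1..m}" using pp permutes_image[OF ri]
    by (simp add: permutations_of_set_def)
  moreover have "distinct (map (inv r) p)" using pp permutes_inj_on[OF ri]
    by (simp add: permutations_of_set_def distinct_map)
  moreover have eq: "map (\<lambda>i. \<bar>y - (w \<circ> r) i\<bar>) (map (inv r) p) = map (\<lambda>i. \<bar>y - w i\<bar>) p"
    by (simp add: permutes_inverses[OF r])
  moreover have "sorted_wrt (<) (map (\<lambda>i. \<bar>y - (w \<circ> r) i\<bar>) (map (inv r) p))"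
    unfolding eq by (rule y)
  ultimately show ?thesis unfolding RP_UF_def permutations_of_set_def by blast
qed

lemma RP_perm:
  assumes r: "r permutes {1..m}"
  shows "RP_UF m (z \<circ> r) = map (inv r) ` RP_UF m z"
proof
  show "map (inv r) ` RP_UF m z \<subseteq> RP_UF m (z \<circ> r)" using RP_perm_sub[OF r] by auto
next
  show "RP_UF m (z \<circ> r) \<subseteq> map (inv r) ` RP_UF m z"
  proof
    fix q assume q: "q \<in> RP_UF m (z \<circ> r)"
    have ri: "inv r permutes {1..m}" using r by (rule permutes_inv)
    have "map (inv (inv r)) q \<in> RP_UF m (z \<circ> r \<circ> inv r)" by (rule RP_perm_sub[OF ri q])
    moreover have "inv (inv r) = r" using r by (rule permutes_inv_inv)
    moreover have "z \<circ> r \<circ> inv r = z" using permutes_inv_o(1)[OF r] by (simp add: comp_assoc)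
    ultimately have "map r q \<in> RP_UF m z" by simp
    moreover have "q = map (inv r) (map r q)" by (simp add: permutes_inv_o[OF r])
    ultimately show "q \<in> map (inv r) ` RP_UF m z" by blast
  qed
qed

lemma RP_neg: "RP_UF m (\<lambda>a. - z a) = RP_UF m z"
proof -
  have *: "RP_UF m (\<lambda>a. - w a) \<subseteq> RP_UF m w" for w
  proof
    fix p assume "p \<in> RP_UF m (\<lambda>a. - w a)"
    then obtain y where y: "sorted_wrt (<) (map (\<lambda>i. \<bar>y - - w i\<bar>) p)" and pp: "p \<in> permutations_of_set {1..m}"
      unfolding RP_UF_def by auto
    have "\<And>i. \<bar>y - - w i\<bar> = \<bar>(-y) - w i\<bar>" by (case_tac "0 \<le> y + w i") auto
    then have eq: "map (\<lambda>i. \<bar>y - - w i\<bar>) p = map (\<lambda>i. \<bar>(-y) - w i\<bar>) p" by simp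
    have "sorted_wrt (<) (map (\<lambda>i. \<bar>(-y) - w i\<bar>) p)" using y unfolding eq .
    then show "p \<in> RP_UF m w" using pp unfolding RP_UF_def by blast
  qed
  show ?thesis using *[of z] *[of "\<lambda>a. - z a"] by auto
qed

definition rk :: "nat \<Rightarrow> (nat \<Rightarrow> real) \<Rightarrow> nat \<Rightarrow> nat" where
  "rk m x a = (if a \<in> {1..m} then card {b\<in>{1..m}. x b \<le> x a} else a)"

lemma rk_mono:
  assumes "a \<in> {1..m}" "b \<in> {1..m}" "x a < x b"
  shows "rk m x a < rk m x b"
proof -
  have "{c\<in>{1..m}. x c \<le> x a} \<subseteq> {c\<in>{1..m}. x c \<le> x b}" using assms(3) by auto
  moreover have "b \<in> {c\<in>{1..m}. x c \<le> x b} - {c\<in>{1..m}. x c \<le> x a}" using assms by auto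
  ultimately have "{c\<in>{1..m}. x c \<le> x a} \<subset> {c\<in>{1..m}. x c \<le> x b}" by blast
  then show ?thesis using assms unfolding rk_def by (simp add: psubset_card_mono)
qed

lemma rk_range:
  assumes "a \<in> {1..m}"
  shows "rk m x a \<in> {1..m}"
proof -
  have "a \<in> {b\<in>{1..m}. x b \<le> x a}" using assms by auto
  moreover have fin: "finite {b\<in>{1..m}. x b \<le> x a}" by simp
  ultimately have "card {b\<in>{1..m}. x b \<le> x a} > 0" by (simp add: card_gt_0_iff; blast)
  then have "card {b\<in>{1..m}. x b \<le> x a} \<ge> 1" by simp
  moreover have "card {b\<in>{1..m}. x b \<le> x a} \<le> card {1..m}"
    by (rule card_mono) auto
  ultimately show ?thesis using assms unfolding rk_def by auto
qed

lemma rk_perm: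
  assumes g: "generic m x" and m3: "m \<ge> 3"
  shows "rk m x permutes {1..m}"
proof (rule bij_imp_permutes)
  have inj: "inj_on (rk m x) {1..m}"
  proof (rule inj_onI)
    fix a b assume ab: "a \<in> {1..m}" "b \<in> {1..m}" "rk m x a = rk m x b"
    show "a = b"
    proof (rule ccontr)
      assume "a \<noteq> b"
      then have "x a \<noteq> x b" using generic_inj[OF g m3] ab by auto
      then have "x a < x b \<or> x b < x a" by auto
      then show False using rk_mono[of a m b x] rk_mono[of b m a x] ab by auto
    qed
  qed
  moreover have "rk m x ` {1..m} \<subseteq> {1..m}" using rk_range by auto
  ultimately have "rk m x ` {1..m} = {1..m}"
    by (simp add: endo_inj_surj)
  then show "bij_betw (rk m x) {1..m} {1..m}" using inj by (simp add: bij_betw_def)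
  fix a assume "a \<notin> {1..m}" then show "rk m x a = a" unfolding rk_def by (rule if_not_P)
qed

lemma sort_exists:
  assumes g: "generic m x" and m3: "m \<ge> 3"
  shows "\<exists>r z. r permutes {1..m} \<and> generic m z \<and> incr m z \<and> x = z \<circ> r"
proof -
  define r where "r = rk m x"
  have r: "r permutes {1..m}" unfolding r_def using rk_perm[OF g m3] .
  have ri: "inv r permutes {1..m}" using r by (rule permutes_inv)
  define z where "z = x \<circ> inv r"
  have "z \<circ> r = x" unfolding z_def by (simp add: comp_assoc permutes_inv_o[OF r])
  moreover have "generic m z" unfolding z_def by (rule generic_perm[OF g ri])
  moreover have "incr m z" unfolding incr_def
  proof (intro allI impI)
    fix i assume i: "1 \<le> i \<and> i < m"
    define b where "b = inv r i"
    define c where "c = inv r (Suc i)"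
    have bc: "b \<in> {1..m}" "c \<in> {1..m}" using i permutes_in_image[OF ri] unfolding b_def c_def by auto
    have rb: "r b = i" and rc: "r c = Suc i" unfolding b_def c_def by (simp_all add: permutes_inverses[OF r])
    have "b \<noteq> c" using rb rc by auto
    then have "x b \<noteq> x c" using generic_inj[OF g m3] bc by auto
    moreover have "\<not> x c < x b"
    proof
      assume "x c < x b"
      then have "r c < r b" unfolding r_def using rk_mono bc by blast
      then show False using rb rc by simp
    qed
    ultimately have "x b < x c" by auto
    then show "z i < z (Suc i)" unfolding z_def b_def c_def by simp
  qed
  ultimately show ?thesis using r by blast
qed

definition relab :: "(nat \<Rightarrow> nat) \<Rightarrow> (nat\<times>nat\<times>nat\<times>nat \<Rightarrow> bool) \<Rightarrow> nat\<times>nat\<times>nat\<times>nat \<Rightarrow> bool" where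
  "relab r s = (\<lambda>(i,j,k,l). s (r i, r j, r k, r l))"

definition Cg :: "nat \<Rightarrow> (nat \<Rightarrow> real) set" where "Cg m = {x. generic m x}"
definition Ci :: "nat \<Rightarrow> (nat \<Rightarrow> real) set" where "Ci m = {x. generic m x \<and> incr m x}"

lemma Qm_perm:
  assumes r: "r permutes {1..m}"
  shows "(r i, r j, r k, r l) \<in> Qm m \<longleftrightarrow> (i,j,k,l) \<in> Qm m"
proof -
  have h: "\<And>a. r a \<in> {1..m} \<longleftrightarrow> a \<in> {1..m}" using permutes_in_image[OF r] by blast
  have h2: "\<And>a b. r a = r b \<longleftrightarrow> a = b" using inj_eq[OF permutes_inj[OF r]] by blast
  show ?thesis by (simp only: Qm_def mem_Collect_eq prod.case h h2)
qed

lemma sig_perm: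
  assumes r: "r permutes {1..m}"
  shows "sig m (z \<circ> r) = relab r (sig m z)"
proof
  fix q show "sig m (z \<circ> r) q = relab r (sig m z) q"
  proof (cases q)
    case (fields i j k l)
    then show ?thesis unfolding sig_def relab_def using Qm_perm[OF r, of i j k l] by simp
  qed
qed

lemma sig_incr_order:
  assumes "incr m z" "a \<in> {1..m}" "b \<in> {1..m}"
  shows "sig m z (a,a,b,b) = (a < b)"
proof -
  have "(a,a,b,b) \<in> Qm m" using assms by (simp add: Qm_def)
  then have "sig m z (a,a,b,b) = (z a + z a < z b + z b)" by (simp add: sig_def)
  also have "\<dots> = (z a < z b)" by auto
  also have "\<dots> = (a < b)" using incr_iff[OF assms] .
  finally show ?thesis .
qed

lemma perm_ge:
  fixes \<sigma> :: "nat \<Rightarrow> nat" and i :: nat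
  assumes s: "\<sigma> permutes {1..m}" and mono: "\<forall>u\<in>{1..m}. \<forall>v\<in>{1..m}. u < v \<longrightarrow> \<sigma> u < \<sigma> v"
    and i: "i \<in> {1..m}"
  shows "i \<le> \<sigma> i"
  using i
proof (induction i)
  case 0 then show ?case by simp
next
  case (Suc i)
  show ?case
  proof (cases "i = 0")
    case True
    then show ?thesis using Suc.prems permutes_in_image[OF s, of 1] by auto
  next
    case False
    then have "i \<in> {1..m}" using Suc.prems by auto
    then have "i \<le> \<sigma> i" using Suc.IH by simp
    moreover have "\<sigma> i < \<sigma> (Suc i)" using mono \<open>i \<in> {1..m}\<close> Suc.prems by auto
    ultimately show ?thesis by simp
  qed
qed

lemma mono_perm_id:
  fixes \<sigma> :: "nat \<Rightarrow> nat"
  assumes s: "\<sigma> permutes {1..m}" and mono: "\<forall>u\<in>{1..m}. \<forall>v\<in>{1..m}. u < v \<longrightarrow> \<sigma> u < \<sigma> v"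
  shows "\<sigma> = id"
proof
  fix i
  show "\<sigma> i = id i"
  proof (cases "i \<in> {1..m}")
    case False then show ?thesis using permutes_not_in[OF s] by simp
  next
    case True
    have si: "inv \<sigma> permutes {1..m}" using s by (rule permutes_inv)
    have monoi: "\<forall>u\<in>{1..m}. \<forall>v\<in>{1..m}. u < v \<longrightarrow> inv \<sigma> u < inv \<sigma> v"
    proof (intro ballI impI)
      fix u v assume uv: "u \<in> {1..m}" "v \<in> {1..m}" "u < v"
      show "inv \<sigma> u < inv \<sigma> v"
      proof (rule ccontr)
        assume "\<not> inv \<sigma> u < inv \<sigma> v"
        moreover have "inv \<sigma> v \<noteq> inv \<sigma> u"
        proof
          assume "inv \<sigma> v = inv \<sigma> u"
          then have "\<sigma> (inv \<sigma> v) = \<sigma> (inv \<sigma> u)" by simp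
          then show False using uv by (simp add: permutes_inverses[OF s])
        qed
        ultimately have lt: "inv \<sigma> v < inv \<sigma> u" by (meson linorder_neqE_nat)
        have "inv \<sigma> u \<in> {1..m}" "inv \<sigma> v \<in> {1..m}"
          using uv permutes_in_image[OF si] by auto
        then have "\<sigma> (inv \<sigma> v) < \<sigma> (inv \<sigma> u)" using mono lt by auto
        then show False using uv by (simp add: permutes_inverses[OF s])
      qed
    qed
    have "i \<le> \<sigma> i" using perm_ge[OF s mono True] .
    moreover have "\<sigma> i \<le> inv \<sigma> (\<sigma> i)"
      using perm_ge[OF si monoi] permutes_in_image[OF s] True by blast
    ultimately show ?thesis by (simp add: permutes_inverses[OF s])
  qed
qed

lemma perm_order_eq:
  fixes r r' :: "nat \<Rightarrow> nat"
  assumes r: "r permutes {1..m}" and r': "r' permutes {1..m}"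
    and ord: "\<forall>a\<in>{1..m}. \<forall>b\<in>{1..m}. r a < r b \<longleftrightarrow> r' a < r' b"
  shows "r = r'"
proof -
  have ri: "inv r permutes {1..m}" using r by (rule permutes_inv)
  have sp: "r' \<circ> inv r permutes {1..m}" using permutes_compose[OF ri r'] .
  have "\<forall>u\<in>{1..m}. \<forall>v\<in>{1..m}. u < v \<longrightarrow> (r' \<circ> inv r) u < (r' \<circ> inv r) v"
  proof (intro ballI impI)
    fix u v assume uv: "u \<in> {1..m}" "v \<in> {1..m}" "u < v"
    have "inv r u \<in> {1..m}" "inv r v \<in> {1..m}" using uv permutes_in_image[OF ri] by auto
    moreover have "r (inv r u) < r (inv r v)" using uv by (simp add: permutes_inverses[OF r])
    ultimately show "(r' \<circ> inv r) u < (r' \<circ> inv r) v" using ord by auto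
  qed
  then have "r' \<circ> inv r = id" using mono_perm_id[OF sp] by blast
  then have "r' \<circ> inv r \<circ> r = r" by simp
  then show ?thesis by (simp add: comp_assoc permutes_inv_o[OF r])
qed

lemma card_sigC:
  assumes m3: "m \<ge> 3"
  shows "card (sig m ` Cg m) = fact m * card (sig m ` Ci m)"
proof -
  define P where "P = {r. r permutes {1..m}}"
  define S where "S = sig m ` Ci m"
  define F where "F = (\<lambda>(r,s). relab r s)"
  have eq: "sig m ` Cg m = F ` (P \<times> S)"
  proof
    show "sig m ` Cg m \<subseteq> F ` (P \<times> S)"
    proof
      fix v assume "v \<in> sig m ` Cg m"
      then obtain x where x: "generic m x" "v = sig m x" unfolding Cg_def by auto
      obtain r z where rz: "r permutes {1..m}" "generic m z" "incr m z" "x = z \<circ> r"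
        using sort_exists[OF x(1) m3] by blast
      have "v = F (r, sig m z)" unfolding F_def using x(2) rz(4) sig_perm[OF rz(1)] by simp
      moreover have "(r, sig m z) \<in> P \<times> S" unfolding P_def S_def Ci_def using rz by auto
      ultimately show "v \<in> F ` (P \<times> S)" by blast
    qed
  next
    show "F ` (P \<times> S) \<subseteq> sig m ` Cg m"
    proof
      fix v assume "v \<in> F ` (P \<times> S)"
      then obtain r z where rz: "r permutes {1..m}" "generic m z" "v = relab r (sig m z)"
        unfolding F_def P_def S_def Ci_def by auto
      then have "v = sig m (z \<circ> r)" using sig_perm[OF rz(1)] by simp
      moreover have "generic m (z \<circ> r)" using generic_perm rz by blast
      ultimately show "v \<in> sig m ` Cg m" unfolding Cg_def by blast
    qed
  qed
  have inj: "inj_on F (P \<times> S)"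
  proof (rule inj_onI)
    fix u w assume u: "u \<in> P \<times> S" and w: "w \<in> P \<times> S" and Fuw: "F u = F w"
    obtain r z where ru: "u = (r, sig m z)" "r permutes {1..m}" "incr m z"
      using u unfolding P_def S_def Ci_def by auto
    obtain r' z' where rw: "w = (r', sig m z')" "r' permutes {1..m}" "incr m z'"
      using w unfolding P_def S_def Ci_def by auto
    have E: "relab r (sig m z) = relab r' (sig m z')" using Fuw ru rw unfolding F_def by simp
    have "\<forall>a\<in>{1..m}. \<forall>b\<in>{1..m}. r a < r b \<longleftrightarrow> r' a < r' b"
    proof (intro ballI)
      fix a b assume ab: "a \<in> {1..m}" "b \<in> {1..m}"
      have "relab r (sig m z) (a,a,b,b) = (r a < r b)"
        unfolding relab_def using sig_incr_order[OF ru(3)] permutes_in_image[OF ru(2)] ab by simp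
      moreover have "relab r' (sig m z') (a,a,b,b) = (r' a < r' b)"
        unfolding relab_def using sig_incr_order[OF rw(3)] permutes_in_image[OF rw(2)] ab by simp
      ultimately show "r a < r b \<longleftrightarrow> r' a < r' b" using E by simp
    qed
    then have rr: "r = r'" using perm_order_eq[OF ru(2) rw(2)] by blast
    have "sig m z = sig m z'"
    proof
      fix q show "sig m z q = sig m z' q"
      proof (cases q)
        case (fields i j k l)
        have "relab r (sig m z) (inv r i, inv r j, inv r k, inv r l) = sig m z q"
          unfolding relab_def fields by (simp add: permutes_inverses[OF ru(2)])
        moreover have "relab r (sig m z') (inv r i, inv r j, inv r k, inv r l) = sig m z' q"
          unfolding relab_def fields by (simp add: permutes_inverses[OF ru(2)])
        ultimately show ?thesis using E rr by simp
      qed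
    qed
    then show "u = w" using ru rw rr by simp
  qed
  have "card (sig m ` Cg m) = card (P \<times> S)" unfolding eq using inj by (rule card_image)
  also have "\<dots> = card P * card S" by (rule card_cartesian_product)
  also have "card P = fact m" unfolding P_def by (rule card_permutations) auto
  finally show ?thesis unfolding S_def by simp
qed

lemma card_kernel:
  assumes "\<forall>x\<in>A. \<forall>y\<in>A. f x = f y \<longleftrightarrow> g x = g y"
  shows "card (f ` A) = card (g ` A)"
proof -
  define h where "h v = g (SOME x. x \<in> A \<and> f x = v)" for v
  have hf: "h (f x) = g x" if "x \<in> A" for x
  proof -
    have "\<exists>y. y \<in> A \<and> f y = f x" using that by blast
    then have "(SOME y. y \<in> A \<and> f y = f x) \<in> A \<and> f (SOME y. y \<in> A \<and> f y = f x) = f x"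
      by (rule someI_ex)
    then show ?thesis unfolding h_def using assms that by blast
  qed
  have "g ` A = h ` (f ` A)" using hf by (auto simp: image_image)
  moreover have "inj_on h (f ` A)"
  proof (rule inj_onI)
    fix u v assume "u \<in> f ` A" "v \<in> f ` A" "h u = h v"
    then obtain x y where "x \<in> A" "y \<in> A" "u = f x" "v = f y" "h u = h v" by blast
    then show "u = v" using hf assms by metis
  qed
  ultimately show ?thesis by (simp add: card_image)
qed

lemma braid_in: "1 \<le> i \<Longrightarrow> i < j \<Longrightarrow> j \<le> m \<Longrightarrow> {x \<in> Rm m. x i = x j} \<in> braid_arr m"
  unfolding braid_arr_def by blast

lemma mid_in: "distinct [i, j, k, l] \<Longrightarrow> 1 \<le> i \<Longrightarrow> i < j \<Longrightarrow> j \<le> m \<Longrightarrow> i < k \<Longrightarrow> k < l \<Longrightarrow> l \<le> m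
   \<Longrightarrow> {x \<in> Rm m. x i + x j = x k + x l} \<in> mid_arr m"
  unfolding mid_arr_def by blast

lemma compl_eq:
  assumes m3: "m \<ge> 3"
  shows "Rm m - \<Union>(mid_arr m) = Cg m"
proof
  show "Cg m \<subseteq> Rm m - \<Union>(mid_arr m)"
  proof
    fix x assume "x \<in> Cg m"
    then have g: "generic m x" unfolding Cg_def by simp
    then have R: "x \<in> Rm m" unfolding generic_def by simp
    have "x \<notin> H" if H: "H \<in> mid_arr m" for H
    proof -
      from H consider (b) i j where "1 \<le> i" "i < j" "j \<le> m" "H = {x \<in> Rm m. x i = x j}"
        | (d) i j k l where "distinct [i, j, k, l]" "1 \<le> i" "i < j" "j \<le> m" "i < k" "k < l" "l \<le> m"
            "H = {x \<in> Rm m. x i + x j = x k + x l}"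
        unfolding mid_arr_def braid_arr_def by blast
      then show ?thesis
      proof cases
        case b
        then have "x i \<noteq> x j" using generic_inj[OF g m3, of i j] by auto
        then show ?thesis using b by auto
      next
        case d
        then have "{i,j} \<noteq> {k,l}" by (auto simp: doubleton_eq_iff)
        then have "x i + x j \<noteq> x k + x l" using g d unfolding generic_alt by auto
        then show ?thesis using d by auto
      qed
    qed
    then show "x \<in> Rm m - \<Union>(mid_arr m)" using R by blast
  qed
next
  show "Rm m - \<Union>(mid_arr m) \<subseteq> Cg m"
  proof
    fix x assume x: "x \<in> Rm m - \<Union>(mid_arr m)"
    have nb: "x a \<noteq> x b" if "a \<in> {1..m}" "b \<in> {1..m}" "a \<noteq> b" for a b
    proof -
      have "braid_arr m \<subseteq> mid_arr m" unfolding mid_arr_def by blast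
      show ?thesis
      proof (cases "a < b")
        case True
        then have "{x \<in> Rm m. x a = x b} \<in> mid_arr m" using braid_in[of a b m] that
          \<open>braid_arr m \<subseteq> mid_arr m\<close> by auto
        then show ?thesis using x by auto
      next
        case False
        then have "b < a" using that by auto
        then have "{x \<in> Rm m. x b = x a} \<in> mid_arr m" using braid_in[of b a m] that
          \<open>braid_arr m \<subseteq> mid_arr m\<close> by auto
        then show ?thesis using x by auto
      qed
    qed
    have nm0: "x a + x b \<noteq> x c + x d" if "distinct [a,b,c,d]" "a \<in> {1..m}" "b \<in> {1..m}" "c \<in> {1..m}" "d \<in> {1..m}"
      "a < b" "c < d" for a b c d
    proof (cases "a < c")
      case True
      then have "{x \<in> Rm m. x a + x b = x c + x d} \<in> mid_arr m" using mid_in[of a b c d m] that by auto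
      then show ?thesis using x by auto
    next
      case False
      then have "c < a" using that by auto
      moreover have "distinct [c,d,a,b]" using that by auto
      ultimately have "{x \<in> Rm m. x c + x d = x a + x b} \<in> mid_arr m" using mid_in[of c d a b m] that by auto
      then show ?thesis using x by auto
    qed
    have nm: "x a + x b \<noteq> x c + x d" if "distinct [a,b,c,d]" "a \<in> {1..m}" "b \<in> {1..m}" "c \<in> {1..m}" "d \<in> {1..m}" for a b c d
    proof -
      have "x a + x b \<noteq> x c + x d" if "distinct [a,b,c,d]" "a \<in> {1..m}" "b \<in> {1..m}" "c \<in> {1..m}" "d \<in> {1..m}" "a < b" for a b c d
      proof (cases "c < d")
        case True then show ?thesis using nm0 that by blast
      next
        case False then have "d < c" using that by auto
        then show ?thesis using nm0[of a b d c] that by (auto simp: add.commute)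
      qed
      note inner = this
      show ?thesis
      proof (cases "a < b")
        case True then show ?thesis using inner that by blast
      next
        case False then have "b < a" using that by auto
        moreover have "distinct [b,a,c,d]" using that by auto
        ultimately show ?thesis using inner[of b a c d] that by (auto simp: add.commute)
      qed
    qed
    have "generic m x" unfolding generic_alt
    proof (intro conjI allI impI)
      show "x \<in> Rm m" using x by simp
      fix i j k l assume h: "i\<in>{1..m} \<and> j\<in>{1..m} \<and> k\<in>{1..m} \<and> l\<in>{1..m}
        \<and> i\<noteq>j \<and> k\<noteq>l \<and> {i,j} \<noteq> {k,l}"
      show "x i + x j \<noteq> x k + x l"
      proof (cases "distinct [i,j,k,l]")
        case True then show ?thesis using nm h by blast
      next
        case False
        then have "i = k \<or> i = l \<or> j = k \<or> j = l" using h by auto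
        then show ?thesis
        proof (elim disjE)
          assume "i = k" then have "j \<noteq> l" using h by auto
          then show ?thesis using nb[of j l] h \<open>i = k\<close> by auto
        next
          assume "i = l" then have "j \<noteq> k" using h by auto
          then show ?thesis using nb[of j k] h \<open>i = l\<close> by auto
        next
          assume "j = k" then have "i \<noteq> l" using h by auto
          then show ?thesis using nb[of i l] h \<open>j = k\<close> by auto
        next
          assume "j = l" then have "i \<noteq> k" using h by auto
          then show ?thesis using nb[of i k] h \<open>j = l\<close> by auto
        qed
      qed
    qed
    then show "x \<in> Cg m" unfolding Cg_def by simp
  qed
qed

lemma sig_deg:
  assumes "{i,j} = {k,l}"
  shows "\<not> sig m v (i,j,k,l)"
proof -
  have "(i = k \<and> j = l) \<or> (i = l \<and> j = k)" using assms by (auto simp: doubleton_eq_iff)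
  then have "v i + v j = v k + v l" by auto
  then show ?thesis unfolding sig_def by simp
qed

lemma sig_nondeg:
  assumes m3: "m \<ge> 3" and v: "v \<in> Cg m" and Q: "(i,j,k,l) \<in> Qm m" and nd: "{i,j} \<noteq> {k,l}"
  shows "v i + v j \<noteq> v k + v l"
proof -
  have g: "generic m v" using v unfolding Cg_def by simp
  have rng: "i\<in>{1..m}" "j\<in>{1..m}" "k\<in>{1..m}" "l\<in>{1..m}" using Q unfolding Qm_def by auto
  show ?thesis
  proof (cases "i = j \<and> k = l")
    case True
    then have "i \<noteq> k" using nd by auto
    then have "v i \<noteq> v k" using generic_inj[OF g m3 rng(1,3)] by simp
    then show ?thesis using True by simp
  next
    case False
    then have "i \<noteq> j" "k \<noteq> l" using Q unfolding Qm_def by auto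
    then show ?thesis using g rng nd unfolding generic_alt by blast
  qed
qed

lemma conv_strict:
  fixes a b c d t :: real
  assumes "a < c" "b < d" "0 \<le> t" "t \<le> 1"
  shows "(1-t)*a + t*b < (1-t)*c + t*d"
proof (cases "t = 1")
  case True then show ?thesis using assms by simp
next
  case False
  then have "0 < 1 - t" using assms by simp
  then have "(1-t)*a < (1-t)*c" using assms by simp
  moreover have "t*b \<le> t*d" using assms by (simp add: mult_left_mono)
  ultimately show ?thesis by simp
qed

lemma seg_generic:
  assumes m3: "m \<ge> 3" and x: "x \<in> Cg m" and w: "w \<in> Cg m" and s: "sig m w = sig m x"
    and t: "0 \<le> t" "t \<le> 1"
  shows "(\<lambda>i. (1-t) * x i + t * w i) \<in> Cg m"
proof -
  have gx: "generic m x" and gw: "generic m w" using x w unfolding Cg_def by auto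
  have "generic m (\<lambda>i. (1-t) * x i + t * w i)" unfolding generic_alt
  proof (intro conjI allI impI)
    show "(\<lambda>i. (1-t) * x i + t * w i) \<in> Rm m" using gx gw unfolding generic_def Rm_def by simp
    fix i j k l assume h: "i\<in>{1..m} \<and> j\<in>{1..m} \<and> k\<in>{1..m} \<and> l\<in>{1..m}
        \<and> i\<noteq>j \<and> k\<noteq>l \<and> {i,j} \<noteq> {k,l}"
    have Q1: "(i,j,k,l) \<in> Qm m" and Q2: "(k,l,i,j) \<in> Qm m" using h unfolding Qm_def by auto
    have nd1: "{i,j} \<noteq> {k,l}" using h by simp
    have ax: "x i + x j \<noteq> x k + x l" using sig_nondeg[OF m3 x Q1 nd1] .
    have aw: "w i + w j \<noteq> w k + w l" using sig_nondeg[OF m3 w Q1 nd1] .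
    have e1: "(x i + x j < x k + x l) = (w i + w j < w k + w l)"
      using fun_cong[OF s, of "(i,j,k,l)"] Q1 unfolding sig_def by simp
    have e2: "(x k + x l < x i + x j) = (w k + w l < w i + w j)"
      using fun_cong[OF s, of "(k,l,i,j)"] Q2 unfolding sig_def by simp
    have "(x i + x j < x k + x l \<and> w i + w j < w k + w l) \<or> (x k + x l < x i + x j \<and> w k + w l < w i + w j)"
      using ax aw e1 e2 by linarith
    then show "(1-t) * x i + t * w i + ((1-t) * x j + t * w j) \<noteq> (1-t) * x k + t * w k + ((1-t) * x l + t * w l)"
    proof
      assume "x i + x j < x k + x l \<and> w i + w j < w k + w l"
      then have "(1-t)*(x i + x j) + t*(w i + w j) < (1-t)*(x k + x l) + t*(w k + w l)"
        using conv_strict t by blast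
      then show ?thesis by (simp add: algebra_simps)
    next
      assume "x k + x l < x i + x j \<and> w k + w l < w i + w j"
      then have "(1-t)*(x k + x l) + t*(w k + w l) < (1-t)*(x i + x j) + t*(w i + w j)"
        using conv_strict t by blast
      then show ?thesis by (simp add: algebra_simps)
    qed
  qed
  then show ?thesis unfolding Cg_def by simp
qed

lemma comp_eq:
  assumes m3: "m \<ge> 3" and x: "x \<in> Cg m"
  shows "connected_component_set (Cg m) x = {w\<in>Cg m. sig m w = sig m x}"
proof
  show "connected_component_set (Cg m) x \<subseteq> {w\<in>Cg m. sig m w = sig m x}"
  proof
    fix w assume wS: "w \<in> connected_component_set (Cg m) x"
    define S where "S = connected_component_set (Cg m) x"
    have SC: "S \<subseteq> Cg m" unfolding S_def by (rule connected_component_subset)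
    have cS: "connected S" unfolding S_def by simp
    have xS: "x \<in> S" using x unfolding S_def by simp
    have wS': "w \<in> S" using wS unfolding S_def by simp
    have "sig m w = sig m x"
    proof
      fix q :: "nat\<times>nat\<times>nat\<times>nat"
      obtain i j k l where q: "q = (i,j,k,l)" by (cases q) auto
      show "sig m w q = sig m x q"
      proof (cases "q \<in> Qm m \<and> {i,j} \<noteq> {k,l}")
        case False
        then have "q \<notin> Qm m \<or> {i,j} = {k,l}" by simp
        then show ?thesis
        proof
          assume "q \<notin> Qm m" then show ?thesis unfolding sig_def q by simp
        next
          assume "{i,j} = {k,l}" then show ?thesis using sig_deg[of i j k l m] unfolding q by blast
        qed
      next
        case True
        then have Q: "(i,j,k,l) \<in> Qm m" and nd: "{i,j} \<noteq> {k,l}" using q by simp_all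
        define f where "f v = v i + v j - (v k + v l)" for v :: "nat \<Rightarrow> real"
        have ci: "\<And>a. continuous_on S (\<lambda>v::nat\<Rightarrow>real. v a)"
          by (rule continuous_on_subset[OF continuous_on_product_coordinates]) simp
        have "continuous_on S f" unfolding f_def
          by (intro continuous_on_diff continuous_on_add ci)
        then have cf: "connected (f ` S)" using cS by (rule connected_continuous_image)
        have nz: "f v \<noteq> 0" if "v \<in> S" for v
        proof -
          have "v \<in> Cg m" using SC that by (rule subsetD)
          then have "v i + v j \<noteq> v k + v l" by (rule sig_nondeg[OF m3 _ Q nd])
          then show ?thesis unfolding f_def by simp
        qed
        have sv: "sig m v q = (f v < 0)" for v
        proof -
          have "sig m v q = (v i + v j < v k + v l)" unfolding sig_def q using Q by simp
          also have "\<dots> = (f v < 0)" unfolding f_def by (rule less_iff_diff_less_0)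
          finally show ?thesis .
        qed
        show ?thesis
        proof (rule ccontr)
          assume ne: "sig m w q \<noteq> sig m x q"
          then have ne': "(f w < 0) \<noteq> (f x < 0)" unfolding sv .
          have fx: "f x \<in> f ` S" using xS by (rule imageI)
          have fw: "f w \<in> f ` S" using wS' by (rule imageI)
          have iv: "\<And>a b c. a \<in> f ` S \<Longrightarrow> b \<in> f ` S \<Longrightarrow> a \<le> c \<Longrightarrow> c \<le> b \<Longrightarrow> c \<in> f ` S"
            using cf unfolding connected_iff_interval by blast
          have "0 \<in> f ` S"
          proof (cases "f x < 0")
            case True
            then have "0 \<le> f w" using ne' by simp
            then show ?thesis using iv[OF fx fw] True by simp
          next
            case False
            then have "f w < 0" using ne' by simp
            then show ?thesis using iv[OF fw fx] False by simp
          qed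
          then obtain v where "v \<in> S" "f v = 0" by (rule imageE) simp
          then show False using nz by blast
        qed
      qed
    qed
    then show "w \<in> {w\<in>Cg m. sig m w = sig m x}" using SC wS' by blast
  qed
next
  show "{w\<in>Cg m. sig m w = sig m x} \<subseteq> connected_component_set (Cg m) x"
  proof
    fix w assume w: "w \<in> {w\<in>Cg m. sig m w = sig m x}"
    then have wC: "w \<in> Cg m" and ws: "sig m w = sig m x" by simp_all
    define g where "g t = (\<lambda>i. (1-t) * x i + t * w i)" for t :: real
    have "continuous_on {0..1} g" unfolding g_def
      by (intro continuous_on_coordinatewise_then_product continuous_intros)
    then have "connected (g ` {0..1})" by (rule connected_continuous_image) simp
    moreover have "g ` {0..1} \<subseteq> Cg m"
    proof
      fix v assume "v \<in> g ` {0..1}"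
      then obtain t where t: "t \<in> {0..1}" "v = g t" by (rule imageE) simp
      then have "0 \<le> t" "t \<le> 1" by simp_all
      then show "v \<in> Cg m" unfolding t(2) g_def by (rule seg_generic[OF m3 x wC ws])
    qed
    moreover have "x \<in> g ` {0..1}"
    proof (rule image_eqI)
      show "x = g 0" unfolding g_def by simp
    qed simp
    moreover have "w \<in> g ` {0..1}"
    proof (rule image_eqI)
      show "w = g 1" unfolding g_def by simp
    qed simp
    ultimately have "connected_component (Cg m) x w" by (rule connected_componentI)
    then show "w \<in> connected_component_set (Cg m) x" by simp
  qed
qed

lemma chambers_card:
  assumes m3: "m \<ge> 3"
  shows "card (chambers m (mid_arr m)) = card (sig m ` Cg m)"
proof -
  define K where "K x = {w\<in>Cg m. sig m w = sig m x}" for x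
  have "chambers m (mid_arr m) = K ` Cg m"
    unfolding chambers_def compl_eq[OF m3] K_def using comp_eq[OF m3] by auto
  moreover have "card (K ` Cg m) = card (sig m ` Cg m)"
  proof (rule card_kernel, intro ballI)
    fix x y assume "x \<in> Cg m" "y \<in> Cg m"
    show "K x = K y \<longleftrightarrow> sig m x = sig m y"
    proof
      assume "K x = K y"
      then have "x \<in> K y" using \<open>x \<in> Cg m\<close> unfolding K_def by auto
      then show "sig m x = sig m y" unfolding K_def by simp
    qed (simp add: K_def)
  qed
  ultimately show ?thesis by simp
qed

definition Erel :: "nat \<Rightarrow> (nat list set \<times> nat list set) set" where
  "Erel m = {(P, Q). P \<in> RPs m \<and> Q \<in> RPs m \<and> RP_equiv m P Q}"

lemma RPs_sub: "P \<in> RPs m \<Longrightarrow> P \<subseteq> permutations_of_set {1..m}"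
  unfolding RPs_def using RP_sub by blast

lemma map_id_on: "set p \<subseteq> A \<Longrightarrow> (\<And>a. a \<in> A \<Longrightarrow> f a = a) \<Longrightarrow> map f p = p"
  by (induction p) auto

lemma Erel_equiv: "equiv (RPs m) (Erel m)"
proof (rule equivI)
  show "Erel m \<subseteq> RPs m \<times> RPs m" unfolding Erel_def by auto
  show "refl_on (RPs m) (Erel m)"
  proof (rule refl_onI)
    fix P assume "P \<in> RPs m"
    moreover have "bij_betw id {1..m} {1..m}" by simp
    moreover have "P = map id ` P" by simp
    ultimately show "(P, P) \<in> Erel m" unfolding Erel_def RP_equiv_def by blast
  qed
  show "sym (Erel m)"
  proof (rule symI)
    fix P Q assume "(P, Q) \<in> Erel m"
    then obtain \<sigma> where PQ: "P \<in> RPs m" "Q \<in> RPs m" "bij_betw \<sigma> {1..m} {1..m}" "P = map \<sigma> ` Q"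
      unfolding Erel_def RP_equiv_def by blast
    define \<tau> where "\<tau> = inv_into {1..m} \<sigma>"
    have bt: "bij_betw \<tau> {1..m} {1..m}" unfolding \<tau>_def using bij_betw_inv_into[OF PQ(3)] .
    have "map \<tau> ` P = Q"
    proof -
      have "map \<tau> ` P = (\<lambda>q. map \<tau> (map \<sigma> q)) ` Q" using PQ(4) by (simp add: image_image)
      also have "\<dots> = (\<lambda>q. q) ` Q"
      proof (rule image_cong[OF refl])
        fix q assume "q \<in> Q"
        then have sq: "set q \<subseteq> {1..m}" using RPs_sub[OF PQ(2)] by (auto simp: permutations_of_set_def)
        have "map (\<tau> \<circ> \<sigma>) q = q"
        proof (rule map_id_on[OF sq])
          fix a assume "a \<in> {1..m}"
          then show "(\<tau> \<circ> \<sigma>) a = a" unfolding \<tau>_def o_def by (rule bij_betw_inv_into_left[OF PQ(3)])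
        qed
        then show "map \<tau> (map \<sigma> q) = q" by simp
      qed
      also have "\<dots> = Q" by simp
      finally show ?thesis .
    qed
    then show "(Q, P) \<in> Erel m" using PQ bt unfolding Erel_def RP_equiv_def by auto
  qed
  show "trans (Erel m)"
  proof (rule transI)
    fix P Q R assume "(P, Q) \<in> Erel m" "(Q, R) \<in> Erel m"
    then obtain \<sigma> \<tau> where h: "P \<in> RPs m" "R \<in> RPs m" "bij_betw \<sigma> {1..m} {1..m}" "P = map \<sigma> ` Q"
      "bij_betw \<tau> {1..m} {1..m}" "Q = map \<tau> ` R"
      unfolding Erel_def RP_equiv_def by blast
    have "bij_betw (\<sigma> \<circ> \<tau>) {1..m} {1..m}" using bij_betw_trans[OF h(5) h(3)] .
    moreover have "P = map (\<sigma> \<circ> \<tau>) ` R" using h(4,6) by (simp add: image_image)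
    ultimately show "(P, R) \<in> Erel m" using h unfolding Erel_def RP_equiv_def by blast
  qed
qed

definition rv :: "nat \<Rightarrow> nat \<Rightarrow> nat" where
  "rv m a = (if a \<in> {1..m} then Suc m - a else a)"

lemma rv_perm: "rv m permutes {1..m}"
proof (rule bij_imp_permutes)
  have inv: "rv m (rv m a) = a" for a unfolding rv_def by auto
  have im: "rv m a \<in> {1..m}" if "a \<in> {1..m}" for a using that unfolding rv_def by auto
  show "bij_betw (rv m) {1..m} {1..m}"
    by (rule bij_betwI[where g="rv m"]) (use inv im in auto)
  show "\<And>a. a \<notin> {1..m} \<Longrightarrow> rv m a = a" unfolding rv_def by auto
qed

lemma rv_rv: "rv m (rv m a) = a" unfolding rv_def by auto

lemma inv_rv: "inv (rv m) = rv m"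
  by (metis inv_unique_comp o_def rv_rv eq_id_iff)

definition ztil :: "nat \<Rightarrow> (nat \<Rightarrow> real) \<Rightarrow> nat \<Rightarrow> real" where
  "ztil m z = (\<lambda>a. - (z \<circ> rv m) a)"

lemma ztil_Ci:
  assumes z: "z \<in> Ci m"
  shows "ztil m z \<in> Ci m"
proof -
  have g: "generic m z" and inc: "incr m z" using z unfolding Ci_def by auto
  have "generic m (ztil m z)" unfolding ztil_def
    by (rule generic_neg[OF generic_perm[OF g rv_perm]])
  moreover have "incr m (ztil m z)" unfolding incr_def
  proof (intro allI impI)
    fix i assume i: "1 \<le> i \<and> i < m"
    have "1 \<le> m - i \<and> m - i < m" using i by auto
    then have "z (m-i) < z (Suc (m-i))" using inc unfolding incr_def by blast
    moreover have "Suc (m - i) = Suc m - i" using i by auto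
    ultimately have "z (m - i) < z (Suc m - i)" by simp
    then show "ztil m z i < ztil m z (Suc i)" using i unfolding ztil_def rv_def by auto
  qed
  ultimately show ?thesis unfolding Ci_def by simp
qed

lemma RP_ztil: "RP_UF m (ztil m z) = map (rv m) ` RP_UF m z"
  unfolding ztil_def RP_neg RP_perm[OF rv_perm] inv_rv ..

lemma upt_sorted_get:
  assumes h: "sorted_wrt R (map f [1..<Suc m])" and ab: "1 \<le> a" "a < b" "b \<le> m"
  shows "R (f a) (f b)"
proof -
  have "R (map f [1..<Suc m] ! (a-1)) (map f [1..<Suc m] ! (b-1))"
    by (rule sorted_wrt_nth_less[OF h]) (use ab in auto)
  moreover have "map f [1..<Suc m] ! (a-1) = f a" using ab by (simp del: upt_Suc add: nth_map)
  moreover have "map f [1..<Suc m] ! (b-1) = f b" using ab by (simp del: upt_Suc add: nth_map)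
  ultimately show ?thesis by simp
qed

lemma upt_sorted_intro:
  assumes h: "\<And>a b. 1 \<le> a \<Longrightarrow> a < b \<Longrightarrow> b \<le> m \<Longrightarrow> R (f a) (f b)"
  shows "sorted_wrt R (map f [1..<Suc m])"
  unfolding sorted_wrt_map
  by (rule sorted_wrt_mono_rel[OF _ sorted_wrt_upt]) (use h in auto)

lemma perm_upt: "[1..<Suc m] \<in> permutations_of_set {1..m}"
  by (auto simp: permutations_of_set_def)

lemma perm_rev_upt: "rev [1..<Suc m] \<in> permutations_of_set {1..m}"
  by (auto simp: permutations_of_set_def)

lemma first_in:
  assumes z: "incr m z"
  shows "[1..<Suc m] \<in> RP_UF m z"
proof -
  define y where "y = z 1 - 1"
  have ge: "z 1 \<le> z a" if "1 \<le> a" "a \<le> m" for a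
  proof (cases "a = 1")
    case False then show ?thesis using incr_mono[OF z, of 1 a] that by auto
  qed simp
  have "sorted_wrt (<) (map (\<lambda>i. \<bar>y - z i\<bar>) [1..<Suc m])"
  proof (rule upt_sorted_intro)
    fix a b assume ab: "1 \<le> a" "a < b" "b \<le> m"
    have "z a < z b" using incr_mono[OF z ab] .
    moreover have "z 1 \<le> z a" using ge ab by simp
    ultimately show "\<bar>y - z a\<bar> < \<bar>y - z b\<bar>" unfolding y_def by simp
  qed
  then show ?thesis using perm_upt unfolding RP_UF_def by blast
qed

lemma last_in:
  assumes z: "incr m z"
  shows "rev [1..<Suc m] \<in> RP_UF m z"
proof -
  define y where "y = z m + 1"
  have le: "z a \<le> z m" if "1 \<le> a" "a \<le> m" for a
  proof (cases "a = m")
    case False then show ?thesis using incr_mono[OF z, of a m] that by auto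
  qed simp
  have "sorted_wrt (\<lambda>u v. v < u) (map (\<lambda>i. \<bar>y - z i\<bar>) [1..<Suc m])"
  proof (rule upt_sorted_intro)
    fix a b assume ab: "1 \<le> a" "a < b" "b \<le> m"
    have "z a < z b" using incr_mono[OF z ab] .
    moreover have "z b \<le> z m" using le ab by simp
    ultimately show "\<bar>y - z b\<bar> < \<bar>y - z a\<bar>" unfolding y_def by simp
  qed
  then have "sorted_wrt (<) (rev (map (\<lambda>i. \<bar>y - z i\<bar>) [1..<Suc m]))"
    unfolding sorted_wrt_rev .
  then have "sorted_wrt (<) (map (\<lambda>i. \<bar>y - z i\<bar>) (rev [1..<Suc m]))"
    unfolding rev_map .
  then show ?thesis using perm_rev_upt unfolding RP_UF_def by blast
qed

lemma F_mono:
  fixes y1 y2 t s :: real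
  assumes "y1 \<le> y2" "t \<le> s"
  shows "\<bar>y1-t\<bar> - \<bar>y2-t\<bar> \<le> \<bar>y1-s\<bar> - \<bar>y2-s\<bar>"
  using assms by (cases "t \<le> y1"; cases "t \<le> y2"; cases "s \<le> y1"; cases "s \<le> y2") (simp_all add: abs_if)

lemma mono_restrict_id:
  fixes \<sigma> :: "nat \<Rightarrow> nat"
  assumes b: "bij_betw \<sigma> {1..m} {1..m}"
    and mono: "\<forall>u\<in>{1..m}. \<forall>v\<in>{1..m}. u < v \<longrightarrow> \<sigma> u < \<sigma> v"
    and a: "a \<in> {1..m}"
  shows "\<sigma> a = a"
proof -
  define \<sigma>' where "\<sigma>' x = (if x \<in> {1..m} then \<sigma> x else x)" for x
  have eqs: "\<sigma>' u = \<sigma> u" if "u \<in> {1..m}" for u unfolding \<sigma>'_def using that by (rule if_P)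
  have "bij_betw \<sigma>' {1..m} {1..m} = bij_betw \<sigma> {1..m} {1..m}" by (rule bij_betw_cong) (rule eqs)
  then have "bij_betw \<sigma>' {1..m} {1..m}" using b by simp
  then have p: "\<sigma>' permutes {1..m}"
  proof (rule bij_imp_permutes)
    fix x assume "x \<notin> {1..m}" then show "\<sigma>' x = x" unfolding \<sigma>'_def by (rule if_not_P)
  qed
  have "\<forall>u\<in>{1..m}. \<forall>v\<in>{1..m}. u < v \<longrightarrow> \<sigma>' u < \<sigma>' v"
  proof (intro ballI impI)
    fix u v assume "u \<in> {1..m}" "v \<in> {1..m}" "u < v"
    then show "\<sigma>' u < \<sigma>' v" using mono eqs[of u] eqs[of v] by simp
  qed
  then have "\<sigma>' = id" using mono_perm_id[OF p] by blast
  then have "\<sigma>' a = a" by simp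
  then show ?thesis using eqs[OF a] by simp
qed

lemma E3:
  assumes m3: "m \<ge> 3" and z: "z \<in> Ci m" and z': "z' \<in> Ci m"
    and E: "RP_equiv m (RP_UF m z) (RP_UF m z')"
  shows "RP_UF m z = RP_UF m z' \<or> RP_UF m z = map (rv m) ` RP_UF m z'"
proof -
  obtain \<sigma> where b: "bij_betw \<sigma> {1..m} {1..m}" and eq: "RP_UF m z = map \<sigma> ` RP_UF m z'"
    using E unfolding RP_equiv_def by blast
  have inc: "incr m z" and inc': "incr m z'" using z z' unfolding Ci_def by auto
  have "map \<sigma> [1..<Suc m] \<in> RP_UF m z" using eq first_in[OF inc'] by blast
  then obtain y1 where y1: "sorted_wrt (<) (map (\<lambda>i. \<bar>y1 - z i\<bar>) (map \<sigma> [1..<Suc m]))"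
    unfolding RP_UF_def by blast
  have "map \<sigma> (rev [1..<Suc m]) \<in> RP_UF m z" using eq last_in[OF inc'] by blast
  then obtain y2 where y2: "sorted_wrt (<) (map (\<lambda>i. \<bar>y2 - z i\<bar>) (map \<sigma> (rev [1..<Suc m])))"
    unfolding RP_UF_def by blast
  have y1': "sorted_wrt (<) (map (\<lambda>a. \<bar>y1 - z (\<sigma> a)\<bar>) [1..<Suc m])" using y1 by (simp add: comp_def)
  have "map (\<lambda>i. \<bar>y2 - z i\<bar>) (map \<sigma> (rev [1..<Suc m])) = rev (map (\<lambda>a. \<bar>y2 - z (\<sigma> a)\<bar>) [1..<Suc m])"
    by (simp add: rev_map)
  then have y2': "sorted_wrt (\<lambda>u v. v < u) (map (\<lambda>a. \<bar>y2 - z (\<sigma> a)\<bar>) [1..<Suc m])"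
    using y2 by (simp only: sorted_wrt_rev)
  define F where "F t = \<bar>y1-t\<bar> - \<bar>y2-t\<bar>" for t
  have Flt: "F (z (\<sigma> a)) < F (z (\<sigma> b))" if "1 \<le> a" "a < b" "b \<le> m" for a b
    using upt_sorted_get[OF y1' that] upt_sorted_get[OF y2' that] unfolding F_def by simp
  have sr: "\<sigma> a \<in> {1..m}" if "a \<in> {1..m}" for a using bij_betw_apply[OF b that] .
  have sne: "\<sigma> a \<noteq> \<sigma> b" if "a \<in> {1..m}" "b \<in> {1..m}" "a \<noteq> b" for a b
    using b that unfolding bij_betw_def inj_on_def by blast
  have setp: "set p \<subseteq> {1..m}" if "p \<in> RP_UF m z'" for p
    using that RP_sub unfolding permutations_of_set_def by blast
  show ?thesis
  proof (cases "y1 \<le> y2")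
    case True
    have mono: "\<forall>u\<in>{1..m}. \<forall>v\<in>{1..m}. u < v \<longrightarrow> \<sigma> u < \<sigma> v"
    proof (intro ballI impI)
      fix u v assume uv: "u \<in> {1..m}" "v \<in> {1..m}" "u < v"
      show "\<sigma> u < \<sigma> v"
      proof (rule ccontr)
        assume "\<not> \<sigma> u < \<sigma> v"
        then have "\<sigma> v < \<sigma> u" using sne[of u v] uv by auto
        then have "z (\<sigma> v) < z (\<sigma> u)" using incr_iff[OF inc sr sr] uv by blast
        then have "F (z (\<sigma> v)) \<le> F (z (\<sigma> u))" unfolding F_def using F_mono[OF True] by simp
        then show False using Flt[of u v] uv by auto
      qed
    qed
    have "\<sigma> a = a" if "a \<in> {1..m}" for a using mono_restrict_id[OF b mono that] .
    then have "map \<sigma> p = p" if "p \<in> RP_UF m z'" for p using map_id_on[OF setp[OF that]] by blast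
    then have "RP_UF m z = RP_UF m z'" unfolding eq by simp
    then show ?thesis by simp
  next
    case False
    then have le: "y2 \<le> y1" by simp
    have mono: "\<forall>u\<in>{1..m}. \<forall>v\<in>{1..m}. u < v \<longrightarrow> (rv m \<circ> \<sigma>) u < (rv m \<circ> \<sigma>) v"
    proof (intro ballI impI)
      fix u v assume uv: "u \<in> {1..m}" "v \<in> {1..m}" "u < v"
      have "\<sigma> v < \<sigma> u"
      proof (rule ccontr)
        assume "\<not> \<sigma> v < \<sigma> u"
        then have "\<sigma> u < \<sigma> v" using sne[of u v] uv by auto
        then have "z (\<sigma> u) < z (\<sigma> v)" using incr_iff[OF inc sr sr] uv by blast
        then have "\<bar>y2 - z (\<sigma> u)\<bar> - \<bar>y1 - z (\<sigma> u)\<bar> \<le> \<bar>y2 - z (\<sigma> v)\<bar> - \<bar>y1 - z (\<sigma> v)\<bar>"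
          using F_mono[OF le] by simp
        then have "F (z (\<sigma> v)) \<le> F (z (\<sigma> u))" unfolding F_def by simp
        then show False using Flt[of u v] uv by auto
      qed
      moreover have "\<sigma> u \<in> {1..m}" "\<sigma> v \<in> {1..m}" using sr uv by auto
      ultimately show "(rv m \<circ> \<sigma>) u < (rv m \<circ> \<sigma>) v" unfolding rv_def by auto
    qed
    have bt: "bij_betw (rv m \<circ> \<sigma>) {1..m} {1..m}"
      using bij_betw_trans[OF b permutes_imp_bij[OF rv_perm]] .
    have "(rv m \<circ> \<sigma>) a = a" if "a \<in> {1..m}" for a using mono_restrict_id[OF bt mono that] .
    then have "\<sigma> a = rv m a" if "a \<in> {1..m}" for a
    proof -
      have "rv m (\<sigma> a) = a" using \<open>\<And>a. a \<in> {1..m} \<Longrightarrow> (rv m \<circ> \<sigma>) a = a\<close>[OF that] by simp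
      then have "rv m (rv m (\<sigma> a)) = rv m a" by simp
      then show ?thesis by (simp add: rv_rv)
    qed
    then have "map \<sigma> p = map (rv m) p" if "p \<in> RP_UF m z'" for p
      using setp[OF that] by (intro map_cong) auto
    then have "RP_UF m z = map (rv m) ` RP_UF m z'" unfolding eq by (intro image_cong) auto
    then show ?thesis by simp
  qed
qed

lemma r0_eq: "r0 m = card (RP_UF m ` Ci m)"
proof -
  have "{RP_UF m x | x. generic m x \<and> (\<forall>i. 1 \<le> i \<and> i < m \<longrightarrow> x i < x (Suc i))} = RP_UF m ` Ci m"
    unfolding Ci_def incr_def by blast
  then show ?thesis unfolding r0_def by simp
qed

lemma card_Inc:
  assumes m3: "m \<ge> 3"
  shows "card (RP_UF m ` Ci m) = card (sig m ` Ci m)"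
proof (rule card_kernel, intro ballI)
  fix x y assume x: "x \<in> Ci m" and y: "y \<in> Ci m"
  have gx: "generic m x" "incr m x" and gy: "generic m y" "incr m y" using x y unfolding Ci_def by auto
  have ord: "\<forall>a\<in>{1..m}. \<forall>b\<in>{1..m}. x a < x b \<longleftrightarrow> y a < y b"
    using incr_iff[OF gx(2)] incr_iff[OF gy(2)] by blast
  show "RP_UF m x = RP_UF m y \<longleftrightarrow> sig m x = sig m y"
    using L2[OF m3 gx(1) gy(1) ord] L1eq[OF m3 gx(1) gy(1)] by blast
qed

lemma chambers_r0:
  assumes m3: "m \<ge> 3"
  shows "card (chambers m (mid_arr m)) = fact m * r0 m"
  using chambers_card[OF m3] card_sigC[OF m3] card_Inc[OF m3] r0_eq by simp

lemma Inc_sub: "RP_UF m ` Ci m \<subseteq> RPs m"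
  unfolding RPs_def Ci_def by blast

lemma Erel_perm:
  assumes "P \<in> RPs m" "Q \<in> RPs m" "r permutes {1..m}" "P = map r ` Q"
  shows "(P, Q) \<in> Erel m"
  using assms permutes_imp_bij[OF assms(3)] unfolding Erel_def RP_equiv_def by blast

lemma classes_eq:
  assumes m3: "m \<ge> 3"
  shows "RPs m // Erel m = (\<lambda>Q. Erel m `` {Q}) ` (RP_UF m ` Ci m)"
proof
  show "RPs m // Erel m \<subseteq> (\<lambda>Q. Erel m `` {Q}) ` (RP_UF m ` Ci m)"
  proof
    fix c assume "c \<in> RPs m // Erel m"
    then obtain P where P: "P \<in> RPs m" "c = Erel m `` {P}" by (rule quotientE) blast
    from P(1) obtain x where x: "generic m x" "P = RP_UF m x" unfolding RPs_def by blast
    obtain r z where rz: "r permutes {1..m}" "generic m z" "incr m z" "x = z \<circ> r"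
      using sort_exists[OF x(1) m3] by blast
    have zC: "z \<in> Ci m" using rz unfolding Ci_def by simp
    have Pe: "P = map (inv r) ` RP_UF m z" using x(2) rz(4) RP_perm[OF rz(1)] by simp
    have zI: "RP_UF m z \<in> RP_UF m ` Ci m" using zC by (rule imageI)
    have zR: "RP_UF m z \<in> RPs m" using Inc_sub zI by (rule subsetD)
    have "(P, RP_UF m z) \<in> Erel m" by (rule Erel_perm[OF P(1) zR permutes_inv[OF rz(1)] Pe])
    then have "Erel m `` {P} = Erel m `` {RP_UF m z}" by (rule equiv_class_eq[OF Erel_equiv])
    then have "c = Erel m `` {RP_UF m z}" using P(2) by simp
    then show "c \<in> (\<lambda>Q. Erel m `` {Q}) ` (RP_UF m ` Ci m)" using zI by (rule image_eqI)
  qed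
next
  show "(\<lambda>Q. Erel m `` {Q}) ` (RP_UF m ` Ci m) \<subseteq> RPs m // Erel m"
  proof
    fix c assume "c \<in> (\<lambda>Q. Erel m `` {Q}) ` (RP_UF m ` Ci m)"
    then obtain Q where Q: "Q \<in> RP_UF m ` Ci m" "c = Erel m `` {Q}" by (rule imageE) simp
    have "Q \<in> RPs m" using Inc_sub Q(1) by (rule subsetD)
    then show "c \<in> RPs m // Erel m" unfolding Q(2) by (rule quotientI)
  qed
qed

lemma fiber:
  assumes m3: "m \<ge> 3" and z: "z \<in> Ci m"
  shows "{Q \<in> RP_UF m ` Ci m. Erel m `` {Q} = Erel m `` {RP_UF m z}}
         = {RP_UF m z, map (rv m) ` RP_UF m z}"
proof
  have zI: "RP_UF m z \<in> RP_UF m ` Ci m" using z by (rule imageI)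
  have zR: "RP_UF m z \<in> RPs m" using Inc_sub zI by (rule subsetD)
  show "{Q \<in> RP_UF m ` Ci m. Erel m `` {Q} = Erel m `` {RP_UF m z}} \<subseteq> {RP_UF m z, map (rv m) ` RP_UF m z}"
  proof
    fix Q assume Qin: "Q \<in> {Q \<in> RP_UF m ` Ci m. Erel m `` {Q} = Erel m `` {RP_UF m z}}"
    then have QI: "Q \<in> RP_UF m ` Ci m" and Qc: "Erel m `` {Q} = Erel m `` {RP_UF m z}" by simp_all
    from QI obtain z' where z': "z' \<in> Ci m" "Q = RP_UF m z'" by (rule imageE) simp
    have QR: "Q \<in> RPs m" using Inc_sub QI by (rule subsetD)
    have "(Q, RP_UF m z) \<in> Erel m" using eq_equiv_class_iff[OF Erel_equiv QR zR] Qc by simp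
    then have "RP_equiv m (RP_UF m z') (RP_UF m z)" using z'(2) unfolding Erel_def by simp
    then have "RP_UF m z' = RP_UF m z \<or> RP_UF m z' = map (rv m) ` RP_UF m z" by (rule E3[OF m3 z'(1) z])
    then show "Q \<in> {RP_UF m z, map (rv m) ` RP_UF m z}" using z'(2) by simp
  qed
next
  have zI: "RP_UF m z \<in> RP_UF m ` Ci m" using z by (rule imageI)
  have P1: "RP_UF m z \<in> RPs m" using Inc_sub zI by (rule subsetD)
  have zt: "ztil m z \<in> Ci m" using ztil_Ci[OF z] .
  have ztI: "RP_UF m (ztil m z) \<in> RP_UF m ` Ci m" using zt by (rule imageI)
  then have P2I: "map (rv m) ` RP_UF m z \<in> RP_UF m ` Ci m" unfolding RP_ztil .
  have P2: "map (rv m) ` RP_UF m z \<in> RPs m" using Inc_sub P2I by (rule subsetD)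
  have "(map (rv m) ` RP_UF m z, RP_UF m z) \<in> Erel m"
    by (rule Erel_perm[OF P2 P1 rv_perm refl])
  then have "Erel m `` {map (rv m) ` RP_UF m z} = Erel m `` {RP_UF m z}"
    by (rule equiv_class_eq[OF Erel_equiv])
  then show "{RP_UF m z, map (rv m) ` RP_UF m z} \<subseteq> {Q \<in> RP_UF m ` Ci m. Erel m `` {Q} = Erel m `` {RP_UF m z}}"
    using zI P2I by simp
qed

lemma E4:
  assumes m4: "m \<ge> 4" and z: "z \<in> Ci m"
  shows "map (rv m) ` RP_UF m z \<noteq> RP_UF m z"
proof
  assume h: "map (rv m) ` RP_UF m z = RP_UF m z"
  have m3: "m \<ge> 3" using m4 by simp
  have zt: "ztil m z \<in> Ci m" using ztil_Ci[OF z] .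
  have g: "generic m z" "incr m z" and gt: "generic m (ztil m z)" "incr m (ztil m z)"
    using z zt unfolding Ci_def by auto
  have ord: "\<forall>a\<in>{1..m}. \<forall>b\<in>{1..m}. ztil m z a < ztil m z b \<longleftrightarrow> z a < z b"
    using incr_iff[OF g(2)] incr_iff[OF gt(2)] by blast
  have "sig m (ztil m z) = sig m z"
    using L2[OF m3 gt(1) g(1) ord] h RP_ztil by simp
  then have e: "sig m (ztil m z) (1, m, 2, m-1) = sig m z (1, m, 2, m-1)" by simp
  have Q: "(1, m, 2, m-1) \<in> Qm m" using m4 unfolding Qm_def by auto
  have r1: "rv m 1 = m" "rv m m = 1" "rv m 2 = m - 1" "rv m (m-1) = 2" using m4 unfolding rv_def by auto
  have "sig m (ztil m z) (1, m, 2, m-1) = (- z m + - z 1 < - z (m-1) + - z 2)"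
    using Q r1 unfolding sig_def ztil_def by simp
  moreover have "sig m z (1, m, 2, m-1) = (z 1 + z m < z 2 + z (m-1))"
    using Q unfolding sig_def by simp
  moreover have "z 1 + z m \<noteq> z 2 + z (m-1)"
  proof -
    have "{1, m} \<noteq> {2, m-1}" using m4 by (auto simp: doubleton_eq_iff)
    moreover from g(1) have H: "\<forall>i j k l. i\<in>{1..m} \<and> j\<in>{1..m} \<and> k\<in>{1..m} \<and> l\<in>{1..m}
      \<and> i\<noteq>j \<and> k\<noteq>l \<and> {i,j} \<noteq> {k,l} \<longrightarrow> z i + z j \<noteq> z k + z l" unfolding generic_alt by blast
    moreover have "(1::nat)\<in>{1..m} \<and> m\<in>{1..m} \<and> (2::nat)\<in>{1..m} \<and> m-1\<in>{1..m} \<and> (1::nat)\<noteq>m \<and> (2::nat)\<noteq>m-1"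
      using m4 by auto
    ultimately show ?thesis by blast
  qed
  ultimately show False using e by auto
qed

lemma fiber_card:
  assumes m4: "m \<ge> 4" and z: "z \<in> Ci m"
  shows "card {Q \<in> RP_UF m ` Ci m. Erel m `` {Q} = Erel m `` {RP_UF m z}} = 2"
  using fiber[OF _ z] E4[OF m4 z] m4 by simp

lemma Inc_finite: "finite (RP_UF m ` Ci m)"
proof (rule finite_subset)
  show "RP_UF m ` Ci m \<subseteq> Pow (permutations_of_set {1..m})" using RP_sub by blast
qed simp

lemma rIE_ge4:
  assumes m4: "m \<ge> 4"
  shows "r0 m = 2 * r_IE m"
proof -
  have m3: "m \<ge> 3" using m4 by simp
  define I where "I = RP_UF m ` Ci m"
  define g where "g Q = Erel m `` {Q}" for Q
  define A where "A c = {Q \<in> I. g Q = c}" for c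
  have fI: "finite I" unfolding I_def by (rule Inc_finite)
  have "I = \<Union>(A ` (g ` I))" unfolding A_def by auto
  then have "card I = card (\<Union>(A ` (g ` I)))" by simp
  also have "\<dots> = (\<Sum>c\<in>g ` I. card (A c))"
    by (rule card_UN_disjoint) (use fI in \<open>auto simp: A_def\<close>)
  also have "\<dots> = (\<Sum>c\<in>g ` I. 2)"
  proof (rule sum.cong[OF refl])
    fix c assume "c \<in> g ` I"
    then obtain z where z: "z \<in> Ci m" "c = g (RP_UF m z)" unfolding I_def by blast
    show "card (A c) = 2" using fiber_card[OF m4 z(1)] z(2) unfolding A_def g_def I_def by simp
  qed
  also have "\<dots> = 2 * card (g ` I)" by simp
  finally have "card I = 2 * card (g ` I)" .
  moreover have "r_IE m = card (RPs m // Erel m)" unfolding r_IE_def Erel_def ..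
  moreover have "card (RPs m // Erel m) = card (g ` I)" unfolding classes_eq[OF m3] g_def I_def ..
  ultimately show ?thesis using r0_eq unfolding I_def by simp
qed

lemma one3: "1 \<le> i \<Longrightarrow> i \<le> (3::nat) \<Longrightarrow> i = 1 \<or> i = 2 \<or> i = 3" by auto

lemma pairsum3:
  assumes z: "incr 3 z" and r: "i \<in> {1..3}" "j \<in> {1..3}" "k \<in> {1..3}" "l \<in> {1..3}"
    and ne: "i \<noteq> j" "k \<noteq> l"
  shows "(z i + z j < z k + z l) = (i + j < k + l)"
proof -
  have "z 1 < z (Suc 1)" by (rule z[unfolded incr_def, rule_format]) simp
  moreover have "z 2 < z (Suc 2)" by (rule z[unfolded incr_def, rule_format]) simp
  ultimately have a: "z 1 < z 2" "z 2 < z 3" by (simp_all add: numeral_eq_Suc)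
  have "i = 1 \<or> i = 2 \<or> i = 3" "j = 1 \<or> j = 2 \<or> j = 3" "k = 1 \<or> k = 2 \<or> k = 3" "l = 1 \<or> l = 2 \<or> l = 3"
    using r by auto
  then show ?thesis using a ne by (elim disjE) auto
qed

lemma sig3:
  assumes z: "z \<in> Ci 3" and z': "z' \<in> Ci 3"
  shows "sig 3 z = sig 3 z'"
proof
  fix q :: "nat\<times>nat\<times>nat\<times>nat"
  obtain i j k l where q: "q = (i,j,k,l)" by (cases q) auto
  have iz: "incr 3 z" and iz': "incr 3 z'" using z z' unfolding Ci_def by auto
  show "sig 3 z q = sig 3 z' q"
  proof (cases "(i,j,k,l) \<in> Qm 3")
    case False then show ?thesis unfolding sig_def q by simp
  next
    case True
    then have r: "i \<in> {1..3}" "j \<in> {1..3}" "k \<in> {1..3}" "l \<in> {1..3}"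
      and c: "(i \<noteq> j \<and> k \<noteq> l) \<or> (i = j \<and> k = l)" unfolding Qm_def by auto
    have "(z i + z j < z k + z l) = (z' i + z' j < z' k + z' l)"
      using c
    proof
      assume "i \<noteq> j \<and> k \<noteq> l"
      then show ?thesis using pairsum3[OF iz r] pairsum3[OF iz' r] by simp
    next
      assume e: "i = j \<and> k = l"
      have "(z i < z k) = (z' i < z' k)" using incr_iff[OF iz r(1,3)] incr_iff[OF iz' r(1,3)] by simp
      then show ?thesis using e by auto
    qed
    then show ?thesis unfolding sig_def q using True by simp
  qed
qed

definition x0 :: "nat \<Rightarrow> real" where "x0 a = (if a = 2 then 1 else if a = 3 then 3 else 0)"

lemma x0_Ci: "x0 \<in> Ci 3"
proof -
  have p: "(i = 1 \<and> j = 2) \<or> (i = 1 \<and> j = 3) \<or> (i = 2 \<and> j = 3)" if "1 \<le> i" "i < j" "j \<le> (3::nat)" for i j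
    using that by auto
  have "generic 3 x0" unfolding generic_def
  proof (intro conjI allI impI)
    show "x0 \<in> Rm 3" unfolding Rm_def x0_def by auto
    fix i j k l :: nat assume h: "1 \<le> i \<and> i < j \<and> j \<le> 3 \<and> 1 \<le> k \<and> k < l \<and> l \<le> 3 \<and> (i, j) \<noteq> (k, l)"
    then have "(i = 1 \<and> j = 2) \<or> (i = 1 \<and> j = 3) \<or> (i = 2 \<and> j = 3)"
      "(k = 1 \<and> l = 2) \<or> (k = 1 \<and> l = 3) \<or> (k = 2 \<and> l = 3)" using p by auto
    then show "(x0 i + x0 j) / 2 \<noteq> (x0 k + x0 l) / 2" using h by (elim disjE) (auto simp: x0_def)
  qed
  moreover have "incr 3 x0" unfolding incr_def
  proof (intro allI impI)
    fix i :: nat assume "1 \<le> i \<and> i < 3"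
    then have "i = 1 \<or> i = 2" by auto
    then show "x0 i < x0 (Suc i)" by (auto simp: x0_def)
  qed
  ultimately show ?thesis unfolding Ci_def by simp
qed

lemma Inc3: "RP_UF 3 ` Ci 3 = {RP_UF 3 x0}"
proof -
  have "RP_UF 3 z = RP_UF 3 x0" if "z \<in> Ci 3" for z
  proof (rule L1eq)
    show "generic 3 z" "generic 3 x0" using that x0_Ci unfolding Ci_def by auto
    show "sig 3 z = sig 3 x0" using sig3[OF that x0_Ci] .
  qed simp
  then show ?thesis using x0_Ci by blast
qed

lemma r0_3: "r0 3 = 1"
  using r0_eq[of 3] Inc3 by simp

lemma rIE_3: "r_IE 3 = 1"
proof -
  have "r_IE 3 = card (RPs 3 // Erel 3)" unfolding r_IE_def Erel_def ..
  also have "\<dots> = card ((\<lambda>Q. Erel 3 `` {Q}) ` {RP_UF 3 x0})" unfolding classes_eq[of 3, simplified] Inc3 ..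
  also have "\<dots> = 1" by simp
  finally show ?thesis .
qed

lemma mid3: "mid_arr 3 = braid_arr 3"
proof -
  have E: "{{x \<in> Rm 3. x i + x j = x k + x l} | i j k l.
        distinct [i, j, k, l] \<and> 1 \<le> i \<and> i < j \<and> j \<le> 3 \<and> i < k \<and> k < l \<and> l \<le> (3::nat)} = {}"
  proof -
    have "\<not> (distinct [i, j, k, l] \<and> 1 \<le> i \<and> i < j \<and> j \<le> 3 \<and> i < k \<and> k < l \<and> l \<le> (3::nat))" for i j k l
    proof
      assume h: "distinct [i, j, k, l] \<and> 1 \<le> i \<and> i < j \<and> j \<le> 3 \<and> i < k \<and> k < l \<and> l \<le> (3::nat)"
      then have "i = 1" "k = 2" "l = 3" by auto
      then show False using h by auto
    qed
    then show ?thesis by blast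
  qed
  show ?thesis unfolding mid_arr_def E by simp
qed

theorem theorem3p3:
  fixes m :: nat
  assumes "m \<ge> 3"
  shows "(m = 3 \<longrightarrow> r_IE 3 = r0 3 \<and> real (r0 3) = real (card (chambers 3 (braid_arr 3))) / fact 3
                   \<and> r_IE 3 = 1)
       \<and> (m \<ge> 4 \<longrightarrow> real (r_IE m) = real (r0 m) / 2
                   \<and> real (r0 m) / 2 = real (card (chambers m (mid_arr m))) / (2 * fact m))"
proof (intro conjI impI)
  show "r_IE 3 = r0 3" using rIE_3 r0_3 by simp
  show "r_IE 3 = 1" by (rule rIE_3)
  have "card (chambers 3 (braid_arr 3)) = fact 3 * r0 3" using chambers_r0[of 3] mid3 by simp
  then have "real (card (chambers 3 (braid_arr 3))) = fact 3 * real (r0 3)" by simp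
  then show "real (r0 3) = real (card (chambers 3 (braid_arr 3))) / fact 3" by simp
next
  assume m4: "m \<ge> 4"
  show "real (r_IE m) = real (r0 m) / 2" using rIE_ge4[OF m4] by simp
  have "card (chambers m (mid_arr m)) = fact m * r0 m" using chambers_r0 m4 by simp
  then have "real (card (chambers m (mid_arr m))) = fact m * real (r0 m)" by simp
  then show "real (r0 m) / 2 = real (card (chambers m (mid_arr m))) / (2 * fact m)" by simp
qed

end
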